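(* In the setting of the context, for every $(x,t)\in[0,1]\times[0,\infty)$ the map $(0,1]\ni\gamma\mapsto u_\gamma(x,t)$ is nondecreasing and continuous, with $u_1(x,t)=Z(x,t)$ and $\lim_{\gamma\to0}u_\gamma(x,t)=X(x,t)$, where \[ X(x,t)=\frac{mf}{\sigma}+\frac{x-\frac{mf}{\sigma}}{1+\frac{\sigma(1-x)}{\sigma-mf}\big(e^{(\sigma-mf)t}-1\big)},\qquad Z(x,t)=1-\frac{(1-x)e^{(\sigma-mf)t}}{1+(1-x)(e^{\sigma t}-1)}. \] Moreover, both the continuity and the convergence are uniform with respect to $(x,t)$ in each compact set $[0,1]\times[0,T]$, $T>0$.
   Context: Fix constants $\sigma>0$, $f>0$, $m>0$ with $\sigma>mf$. For $\gamma\in(0,1]$ let $u_\gamma$ be the unique (mild, in fact classical) solution of \[ \partial_tu_\gamma+\sigma x(1-x)\partial_xu_\gamma=\frac{mf}{\gamma}\big[u_\gamma(x+\gamma(1-x),t)-u_\gamma(x,t)\big]\ (0\le x\le1,\ t>0),\quad u_\gamma(x,0)=x. \] (This is the expected frequency of the low-fitness species when mutations occur only towards it, with jump size $\gamma$ and time intensity $\lambda=m/\gamma$, fitness $f$ of the high-fitness species and selection rate $\sigma$.) *)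

theory Defs
  imports "HOL-Analysis.Analysis"
begin

text \<open>Classical solution of
  d_t v + sigma x (1-x) d_x v = (m f / gamma) [v(x + gamma(1-x), t) - v(x,t)]
  on [0,1] x [0,oo), v(x,0) = x.  The function v is jointly continuous on
  [0,1] x [0,oo) and (Frechet) differentiable in (x,t) on [0,1] x (0,oo)
  (one-sided in x at the endpoints), with partial derivatives Dx, Dt.\<close>

definition is_solution :: "real \<Rightarrow> real \<Rightarrow> real \<Rightarrow> real \<Rightarrow> (real \<Rightarrow> real \<Rightarrow> real) \<Rightarrow> bool" where
  "is_solution \<sigma> f m \<gamma> v \<longleftrightarrow>
     continuous_on ({0..1} \<times> {0..}) (\<lambda>(x, t). v x t) \<and>
     (\<forall>x\<in>{0..1}. v x 0 = x) \<and>
     (\<forall>x\<in>{0..1}. \<forall>t>0. \<exists>Dx Dt.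
        ((\<lambda>(y, s). v y s) has_derivative (\<lambda>(h, k). h * Dx + k * Dt))
          (at (x, t) within {0..1} \<times> {0<..}) \<and>
        Dt + \<sigma> * x * (1 - x) * Dx = (m * f / \<gamma>) * (v (x + \<gamma> * (1 - x)) t - v x t))"

definition X_lim :: "real \<Rightarrow> real \<Rightarrow> real \<Rightarrow> real \<Rightarrow> real \<Rightarrow> real" where
  "X_lim \<sigma> f m x t = m * f / \<sigma> +
     (x - m * f / \<sigma>) / (1 + \<sigma> * (1 - x) / (\<sigma> - m * f) * (exp ((\<sigma> - m * f) * t) - 1))"

definition Z_one :: "real \<Rightarrow> real \<Rightarrow> real \<Rightarrow> real \<Rightarrow> real \<Rightarrow> real" where
  "Z_one \<sigma> f m x t = 1 - (1 - x) * exp ((\<sigma> - m * f) * t) / (1 + (1 - x) * (exp (\<sigma> * t) - 1))"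

end

theory Submission
  imports Defs
begin

lemma deriv_left_max:
  fixes h :: "real \<Rightarrow> real"
  assumes d: "(h has_real_derivative d) (at t within {0<..})" and t: "t > 0"
    and mx: "\<forall>s\<in>{0<..t}. h s \<le> h t"
  shows "d \<ge> 0"
proof -
  have "((\<lambda>y. (h y - h t) / (y - t)) \<longlongrightarrow> d) (at t within {0<..})"
    using d by (simp add: has_field_derivative_iff)
  then have lim: "((\<lambda>y. (h y - h t) / (y - t)) \<longlongrightarrow> d) (at t within {0<..<t})"
    by (rule tendsto_within_subset) auto
  have nt: "at t within {0<..<t} \<noteq> bot"
    using t by (simp add: at_within_eq_bot_iff)
  have ev: "eventually (\<lambda>y. (h y - h t) / (y - t) \<ge> 0) (at t within {0<..<t})"
    unfolding eventually_at_filter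
    using mx by (auto intro!: always_eventually divide_nonpos_neg simp: )
  show ?thesis using tendsto_lowerbound[OF lim ev nt] .
qed

lemma sol_partials:
  assumes "is_solution \<sigma> f m \<gamma> v" "x \<in> {0..1}" "t > 0"
  shows "\<exists>Dx Dt. ((\<lambda>s. v x s) has_real_derivative Dt) (at t within {0<..}) \<and>
     ((\<lambda>y. v y t) has_real_derivative Dx) (at x within {0..1}) \<and>
     Dt + \<sigma> * x * (1 - x) * Dx = (m * f / \<gamma>) * (v (x + \<gamma> * (1 - x)) t - v x t)"
proof -
  have "\<exists>Dx Dt. ((\<lambda>(y, s). v y s) has_derivative (\<lambda>(h, k). h * Dx + k * Dt)) (at (x, t) within {0..1} \<times> {0<..}) \<and>
     Dt + \<sigma> * x * (1 - x) * Dx = (m * f / \<gamma>) * (v (x + \<gamma> * (1 - x)) t - v x t)"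
    using assms unfolding is_solution_def by blast
  then obtain Dx Dt where
    D: "((\<lambda>(y, s). v y s) has_derivative (\<lambda>(h, k). h * Dx + k * Dt)) (at (x, t) within {0..1} \<times> {0<..})"
    and E: "Dt + \<sigma> * x * (1 - x) * Dx = (m * f / \<gamma>) * (v (x + \<gamma> * (1 - x)) t - v x t)"
    by (elim exE conjE)
  have i1: "((\<lambda>s. (x, s)) has_derivative (\<lambda>k. (0, k))) (at t within {0<..})"
    by (rule has_derivative_Pair[OF has_derivative_const has_derivative_ident])
  have D1: "((\<lambda>(y, s). v y s) has_derivative (\<lambda>(h, k). h * Dx + k * Dt)) (at ((\<lambda>s. (x, s)) t) within (\<lambda>s. (x, s)) ` {0<..})"
    by (rule has_derivative_subset[OF D]) (use assms in auto)
  have "((\<lambda>s. (\<lambda>(y, s). v y s) ((\<lambda>s. (x, s)) s)) has_derivative (\<lambda>k. (\<lambda>(h, k). h * Dx + k * Dt) ((\<lambda>k. (0, k)) k))) (at t within {0<..})"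
    by (rule has_derivative_in_compose[OF i1 D1])
  then have T: "((\<lambda>s. v x s) has_real_derivative Dt) (at t within {0<..})"
    by (simp add: has_field_derivative_def mult_commute_abs)
  have i2: "((\<lambda>y. (y, t)) has_derivative (\<lambda>h. (h, 0))) (at x within {0..1})"
    by (rule has_derivative_Pair[OF has_derivative_ident has_derivative_const])
  have D2: "((\<lambda>(y, s). v y s) has_derivative (\<lambda>(h, k). h * Dx + k * Dt)) (at ((\<lambda>y. (y, t)) x) within (\<lambda>y. (y, t)) ` {0..1})"
    by (rule has_derivative_subset[OF D]) (use assms in auto)
  have "((\<lambda>y. (\<lambda>(y, s). v y s) ((\<lambda>y. (y, t)) y)) has_derivative (\<lambda>h. (\<lambda>(h, k). h * Dx + k * Dt) ((\<lambda>h. (h, 0)) h))) (at x within {0..1})"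
    by (rule has_derivative_in_compose[OF i2 D2])
  then have X: "((\<lambda>y. v y t) has_real_derivative Dx) (at x within {0..1})"
    by (simp add: has_field_derivative_def mult_commute_abs)
  show ?thesis
    apply (rule exI[where x=Dx])
    apply (rule exI[where x=Dt])
    using T X E by (intro conjI)
qed

lemma deriv_interior:
  assumes "(g has_real_derivative d) (at x within {0..1})" "0 < x" "x < 1"
  shows "(g has_real_derivative d) (at x)"
proof -
  have "x \<in> interior {0..(1::real)}" using assms by simp
  then have "at x within {0..1} = at x" by (rule at_within_interior)
  then show ?thesis using assms(1) by simp
qed
lemma comparison:
  fixes w :: "real \<Rightarrow> real \<Rightarrow> real" and b \<phi> :: "real \<Rightarrow> real"
  assumes cont: "continuous_on ({0..1} \<times> {0..T}) (\<lambda>(x, t). w x t)"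
    and init: "\<forall>x\<in>{0..1}. w x 0 \<le> 0"
    and b0: "b 0 = 0" "b 1 = 0" and r: "r \<ge> 0" and phi: "\<forall>x\<in>{0..1}. \<phi> x \<in> {0..1}"
    and der: "\<forall>x\<in>{0..1}. \<forall>t\<in>{0<..T}. \<exists>Dx Dt.
        ((\<lambda>s. w x s) has_real_derivative Dt) (at t within {0<..}) \<and>
        ((\<lambda>y. w y t) has_real_derivative Dx) (at x within {0..1}) \<and>
        Dt + b x * Dx - r * (w (\<phi> x) t - w x t) \<le> \<delta>"
    and x: "x \<in> {0..1}" and t: "t \<in> {0..T}"
  shows "w x t \<le> \<delta> * t"
proof (rule ccontr)
  assume "\<not> w x t \<le> \<delta> * t"
  then have pos: "w x t - \<delta> * t > 0" by simp
  define \<epsilon> where "\<epsilon> = (w x t - \<delta> * t) / (2 * (t + 1))"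
  have t0: "t \<ge> 0" using t by simp
  have ep: "\<epsilon> > 0" using pos t0 by (simp add: \<epsilon>_def)
  have "\<epsilon> * (t + 1) = (w x t - \<delta> * t) / 2"
    using t0 unfolding \<epsilon>_def by (simp add: field_simps add_pos_pos)
  then have Gxt: "w x t - (\<delta> + \<epsilon>) * t - \<epsilon> > 0" using pos by (simp add: algebra_simps)
  define G where "G = (\<lambda>(y, s). w y s - (\<delta> + \<epsilon>) * s - \<epsilon>)"
  have cG: "continuous_on ({0..1} \<times> {0..T}) G"
    unfolding G_def
    using cont by (auto intro!: continuous_intros simp: split_beta)
  have "\<exists>p\<in>{0..1} \<times> {0..T}. \<forall>q\<in>{0..1} \<times> {0..T}. G q \<le> G p"
    by (rule continuous_attains_sup[OF compact_Times[OF compact_Icc compact_Icc] _ cG]) (use x t in auto)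
  then obtain p where p: "p \<in> {0..1} \<times> {0..T}" and pmax: "\<forall>q\<in>{0..1} \<times> {0..T}. G q \<le> G p"
    by blast
  obtain x0 t0' where p_eq: "p = (x0, t0')" by force
  have x0: "x0 \<in> {0..1}" and t0'T: "t0' \<in> {0..T}" using p p_eq by auto
  have "(x, t) \<in> {0..1} \<times> {0..T}" using x t by auto
  from pmax[rule_format, OF this] have Gp: "G p > 0" using Gxt by (simp add: G_def)
  have "t0' \<noteq> 0"
  proof
    assume "t0' = 0"
    then have "G p = w x0 0 - \<epsilon>" by (simp add: G_def p_eq)
    moreover have "w x0 0 \<le> 0" using init x0 by blast
    ultimately show False using ep Gp by linarith
  qed
  then have t0pos: "t0' > 0" using t0'T by simp
  have "\<exists>Dx Dt. ((\<lambda>s. w x0 s) has_real_derivative Dt) (at t0' within {0<..}) \<and>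
        ((\<lambda>y. w y t0') has_real_derivative Dx) (at x0 within {0..1}) \<and>
        Dt + b x0 * Dx - r * (w (\<phi> x0) t0' - w x0 t0') \<le> \<delta>"
    by (rule der[rule_format]) (use x0 t0pos t0'T in auto)
  then obtain Dx Dt where T1: "((\<lambda>s. w x0 s) has_real_derivative Dt) (at t0' within {0<..})"
    and X1: "((\<lambda>y. w y t0') has_real_derivative Dx) (at x0 within {0..1})"
    and E1: "Dt + b x0 * Dx - r * (w (\<phi> x0) t0' - w x0 t0') \<le> \<delta>"
    by blast
  have h1: "((\<lambda>s. w x0 s - (\<delta> + \<epsilon>) * s - \<epsilon>) has_real_derivative Dt - (\<delta> + \<epsilon>)) (at t0' within {0<..})"
    by (auto intro!: derivative_eq_intros T1)
  have h2: "\<forall>s\<in>{0<..t0'}. w x0 s - (\<delta> + \<epsilon>) * s - \<epsilon> \<le> w x0 t0' - (\<delta> + \<epsilon>) * t0' - \<epsilon>"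
  proof
    fix s assume s: "s \<in> {0<..t0'}"
    then have "(x0, s) \<in> {0..1} \<times> {0..T}" using x0 t0'T by auto
    from pmax[rule_format, OF this] show "w x0 s - (\<delta> + \<epsilon>) * s - \<epsilon> \<le> w x0 t0' - (\<delta> + \<epsilon>) * t0' - \<epsilon>"
      by (simp add: G_def p_eq)
  qed
  have "Dt - (\<delta> + \<epsilon>) \<ge> 0" by (rule deriv_left_max[OF h1 t0pos h2])
  moreover have "b x0 * Dx = 0"
  proof (cases "0 < x0 \<and> x0 < 1")
    case True
    have dd: "((\<lambda>y. w y t0') has_real_derivative Dx) (at x0)"
      using deriv_interior[OF X1] True by blast
    have "\<forall>y. \<bar>x0 - y\<bar> < min x0 (1 - x0) \<longrightarrow> w y t0' \<le> w x0 t0'"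
    proof (intro allI impI)
      fix y assume "\<bar>x0 - y\<bar> < min x0 (1 - x0)"
      then have "y \<in> {0..1}" by auto
      then have "(y, t0') \<in> {0..1} \<times> {0..T}" using t0'T by auto
      from pmax[rule_format, OF this] show "w y t0' \<le> w x0 t0'"
        by (simp add: G_def p_eq)
    qed
    then have "Dx = 0" using True by (intro DERIV_local_max[OF dd, of "min x0 (1-x0)"]) auto
    then show ?thesis by simp
  next
    case False
    then have "x0 = 0 \<or> x0 = 1" using x0 by auto
    then show ?thesis by (elim disjE) (simp_all add: b0)
  qed
  moreover have "w (\<phi> x0) t0' \<le> w x0 t0'"
  proof -
    have "(\<phi> x0, t0') \<in> {0..1} \<times> {0..T}" using phi x0 t0'T by auto
    from pmax[rule_format, OF this] show ?thesis by (simp add: G_def p_eq)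
  qed
  ultimately have "r * (w (\<phi> x0) t0' - w x0 t0') \<le> 0" "Dt \<ge> \<delta> + \<epsilon>" "b x0 * Dx = 0"
    using r by (simp_all add: mult_nonneg_nonpos)
  then show False using E1 ep by linarith
qed

lemma sol_cont:
  assumes "is_solution \<sigma> f m \<gamma> v"
  shows "continuous_on ({0..1} \<times> {0..T}) (\<lambda>(x, t). v x t)"
proof -
  have "continuous_on ({0..1} \<times> {0..}) (\<lambda>(x, t). v x t)" using assms unfolding is_solution_def by blast
  then show ?thesis by (rule continuous_on_subset) auto
qed

lemma sol_init:
  assumes "is_solution \<sigma> f m \<gamma> v" "x \<in> {0..1}"
  shows "v x 0 = x"
  using assms unfolding is_solution_def by blast

lemma phi_in:
  fixes \<gamma> x :: real
  assumes "0 < \<gamma>" "\<gamma> \<le> 1" "x \<in> {0..1}"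
  shows "x + \<gamma> * (1 - x) \<in> {0..1}"
proof -
  have "0 \<le> \<gamma> * (1 - x)" "\<gamma> * (1 - x) \<le> 1 - x" using assms by (auto intro: mult_left_le_one_le)
  then show ?thesis using assms by auto
qed

lemma sol_vs_W:
  fixes v W :: "real \<Rightarrow> real \<Rightarrow> real"
  assumes vs: "is_solution \<sigma> f m \<gamma> v" and g: "0 < \<gamma>" "\<gamma> \<le> 1" and mf: "m * f \<ge> 0"
    and Wc: "continuous_on ({0..1} \<times> {0..T}) (\<lambda>(x, t). W x t)"
    and W0: "\<forall>x\<in>{0..1}. W x 0 = x"
    and WD: "\<forall>x\<in>{0..1}. \<forall>t\<in>{0<..T}. \<exists>Dx Dt.
        ((\<lambda>s. W x s) has_real_derivative Dt) (at t within {0<..}) \<and>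
        ((\<lambda>y. W y t) has_real_derivative Dx) (at x within {0..1}) \<and>
        c * (Dt + \<sigma> * x * (1 - x) * Dx - (m * f / \<gamma>) * (W (x + \<gamma> * (1 - x)) t - W x t)) \<ge> - \<delta>"
    and c: "c = 1 \<or> c = -1"
    and x: "x \<in> {0..1}" and t: "t \<in> {0..T}"
  shows "c * (v x t - W x t) \<le> \<delta> * t"
proof -
  define w where "w = (\<lambda>x t. c * (v x t - W x t))"
  have 1: "continuous_on ({0..1} \<times> {0..T}) (\<lambda>(x, t). w x t)"
    unfolding w_def using continuous_on_mult_left[OF continuous_on_diff[OF sol_cont[OF vs, of T] Wc], of c]
    by (simp add: split_beta)
  have 2: "\<forall>x\<in>{0..1}. w x 0 \<le> 0" using W0 sol_init[OF vs] by (simp add: w_def)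
  have 3: "0 \<le> m * f / \<gamma>" using mf g by simp
  have 4: "\<forall>x\<in>{0..1}. x + \<gamma> * (1 - x) \<in> {0..1}" using phi_in g by blast
  have 5: "\<forall>x\<in>{0..1}. \<forall>t\<in>{0<..T}. \<exists>Dx Dt.
        ((\<lambda>s. w x s) has_real_derivative Dt) (at t within {0<..}) \<and>
        ((\<lambda>y. w y t) has_real_derivative Dx) (at x within {0..1}) \<and>
        Dt + (\<lambda>x. \<sigma> * x * (1 - x)) x * Dx - m * f / \<gamma> * (w ((\<lambda>x. x + \<gamma> * (1 - x)) x) t - w x t) \<le> \<delta>"
  proof (intro ballI)
    fix x t :: real assume x: "x \<in> {0..1}" and t: "t \<in> {0<..T}"
    obtain Dx Dt where a1: "((\<lambda>s. v x s) has_real_derivative Dt) (at t within {0<..})"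
      and a2: "((\<lambda>y. v y t) has_real_derivative Dx) (at x within {0..1})"
      and a3: "Dt + \<sigma> * x * (1 - x) * Dx = (m * f / \<gamma>) * (v (x + \<gamma> * (1 - x)) t - v x t)"
      using sol_partials[OF vs x, of t] t by (simp only: greaterThanAtMost_iff) blast
    have "\<exists>Dx Dt.
        ((\<lambda>s. W x s) has_real_derivative Dt) (at t within {0<..}) \<and>
        ((\<lambda>y. W y t) has_real_derivative Dx) (at x within {0..1}) \<and>
        c * (Dt + \<sigma> * x * (1 - x) * Dx - (m * f / \<gamma>) * (W (x + \<gamma> * (1 - x)) t - W x t)) \<ge> - \<delta>"
      by (rule WD[rule_format]) (use x t in auto)
    then obtain Ex Et where b1: "((\<lambda>s. W x s) has_real_derivative Et) (at t within {0<..})"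
      and b2: "((\<lambda>y. W y t) has_real_derivative Ex) (at x within {0..1})"
      and b3: "c * (Et + \<sigma> * x * (1 - x) * Ex - (m * f / \<gamma>) * (W (x + \<gamma> * (1 - x)) t - W x t)) \<ge> - \<delta>"
      by blast
    have c1: "((\<lambda>s. w x s) has_real_derivative c * (Dt - Et)) (at t within {0<..})"
      unfolding w_def by (rule DERIV_cmult[OF DERIV_diff[OF a1 b1]])
    have c2: "((\<lambda>y. w y t) has_real_derivative c * (Dx - Ex)) (at x within {0..1})"
      unfolding w_def by (rule DERIV_cmult[OF DERIV_diff[OF a2 b2]])
    have z: "Dt + \<sigma> * x * (1 - x) * Dx - (m * f / \<gamma>) * (v (x + \<gamma> * (1 - x)) t - v x t) = 0"
      using a3 by simp
    have "c * (Dt - Et) + \<sigma> * x * (1 - x) * (c * (Dx - Ex)) - m * f / \<gamma> * (w (x + \<gamma> * (1 - x)) t - w x t)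
          = c * (Dt + \<sigma> * x * (1 - x) * Dx - (m * f / \<gamma>) * (v (x + \<gamma> * (1 - x)) t - v x t))
           - (c * (Et + \<sigma> * x * (1 - x) * Ex - (m * f / \<gamma>) * (W (x + \<gamma> * (1 - x)) t - W x t)))"
      unfolding w_def by (simp add: algebra_simps)
    also have "\<dots> = - (c * (Et + \<sigma> * x * (1 - x) * Ex - (m * f / \<gamma>) * (W (x + \<gamma> * (1 - x)) t - W x t)))"
      by (simp only: z mult_zero_right diff_0)
    also have "\<dots> \<le> \<delta>" using b3 by simp
    finally show "\<exists>Dx Dt.
        ((\<lambda>s. w x s) has_real_derivative Dt) (at t within {0<..}) \<and>
        ((\<lambda>y. w y t) has_real_derivative Dx) (at x within {0..1}) \<and>
        Dt + (\<lambda>x. \<sigma> * x * (1 - x)) x * Dx - m * f / \<gamma> * (w ((\<lambda>x. x + \<gamma> * (1 - x)) x) t - w x t) \<le> \<delta>"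
      using c1 c2 by auto
  qed
  have "w x t \<le> \<delta> * t"
    by (rule comparison[OF 1 2 _ _ 3 4 5 x t]) simp_all
  then show ?thesis by (simp add: w_def)
qed

lemma Z_den_pos:
  fixes \<sigma> x t :: real
  assumes "\<sigma> > 0" "x \<le> 1" "t \<ge> 0"
  shows "1 + (1 - x) * (exp (\<sigma> * t) - 1) \<ge> 1"
proof -
  have "exp (\<sigma> * t) \<ge> 1" using assms by simp
  then show ?thesis using assms by simp
qed

lemma Z_dt:
  fixes \<sigma> f m x t :: real
  assumes "\<sigma> > 0" "x \<le> 1" "t \<ge> 0"
  defines "D \<equiv> 1 + (1 - x) * (exp (\<sigma> * t) - 1)"
  shows "((\<lambda>s. Z_one \<sigma> f m x s) has_real_derivative
     - ((exp ((\<sigma> - m * f) * t) * (\<sigma> - m * f) * (1 - x) * D - (1 - x) * exp ((\<sigma> - m * f) * t) * (exp (\<sigma> * t) * \<sigma> * (1 - x))) / (D * D))) (at t)"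
proof -
  have "D \<ge> 1" using Z_den_pos[OF assms(1-3)] by (simp add: D_def)
  then show ?thesis
    unfolding Z_one_def D_def
    by (auto intro!: derivative_eq_intros)
qed

lemma Z_dx:
  fixes \<sigma> f m x t :: real
  assumes "\<sigma> > 0" "x \<le> 1" "t \<ge> 0"
  defines "D \<equiv> 1 + (1 - x) * (exp (\<sigma> * t) - 1)"
  shows "((\<lambda>y. Z_one \<sigma> f m y t) has_real_derivative exp ((\<sigma> - m * f) * t) / D^2) (at x)"
proof -
  have "D \<ge> 1" using Z_den_pos[OF assms(1-3)] by (simp add: D_def)
  then show ?thesis
    unfolding Z_one_def D_def
    by (auto intro!: derivative_eq_intros simp: power2_eq_square field_simps)
qed

lemma Z_alg:
  fixes E F D c mf s x \<sigma> :: real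
  assumes "D = 1 + s * (F - 1)" "D \<noteq> 0" "\<sigma> = c + mf" "s = 1 - x"
  shows "- ((E * c * s * D - s * E * (F * \<sigma> * s)) / (D * D)) + \<sigma> * x * s * (E / D^2) - mf * (s * E / D) = 0"
  using assms by (simp add: field_simps power2_eq_square) algebra

lemma Z_cont:
  fixes \<sigma> f m :: real
  assumes "\<sigma> > 0"
  shows "continuous_on ({0..1} \<times> {0..T}) (\<lambda>(x, t). Z_one \<sigma> f m x t)"
proof -
  have "\<forall>p\<in>{0..1} \<times> {0..T}. 1 + (1 - fst p) * (exp (\<sigma> * snd p) - 1) \<noteq> 0"
    using Z_den_pos[OF assms] by force
  then show ?thesis unfolding Z_one_def split_beta
    by (auto intro!: continuous_intros)
qed

lemma Z_resid:
  fixes \<sigma> f m :: real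
  assumes "\<sigma> > 0" "x \<in> {0..1}" "t > 0"
  shows "\<exists>Dx Dt. ((\<lambda>s. Z_one \<sigma> f m x s) has_real_derivative Dt) (at t within {0<..}) \<and>
        ((\<lambda>y. Z_one \<sigma> f m y t) has_real_derivative Dx) (at x within {0..1}) \<and>
        Dt + \<sigma> * x * (1 - x) * Dx - (m * f / 1) * (Z_one \<sigma> f m (x + 1 * (1 - x)) t - Z_one \<sigma> f m x t) = 0"
proof -
  define D where "D = 1 + (1 - x) * (exp (\<sigma> * t) - 1)"
  have x1: "x \<le> 1" and t0: "t \<ge> 0" using assms by auto
  have Dpos: "D \<ge> 1" using Z_den_pos[OF assms(1) x1 t0] by (simp add: D_def)
  have dt: "((\<lambda>s. Z_one \<sigma> f m x s) has_real_derivative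
     - ((exp ((\<sigma> - m * f) * t) * (\<sigma> - m * f) * (1 - x) * D - (1 - x) * exp ((\<sigma> - m * f) * t) * (exp (\<sigma> * t) * \<sigma> * (1 - x))) / (D * D))) (at t within {0<..})"
    using Z_dt[OF assms(1) x1 t0] unfolding D_def by (rule has_field_derivative_at_within)
  have dx: "((\<lambda>y. Z_one \<sigma> f m y t) has_real_derivative exp ((\<sigma> - m * f) * t) / D^2) (at x within {0..1})"
    using Z_dx[OF assms(1) x1 t0] unfolding D_def by (rule has_field_derivative_at_within)
  have z1: "Z_one \<sigma> f m (x + 1 * (1 - x)) t = 1" by (simp add: Z_one_def)
  have zx: "Z_one \<sigma> f m x t = 1 - (1 - x) * exp ((\<sigma> - m * f) * t) / D" by (simp add: Z_one_def D_def)
  have "- ((exp ((\<sigma> - m * f) * t) * (\<sigma> - m * f) * (1 - x) * D - (1 - x) * exp ((\<sigma> - m * f) * t) * (exp (\<sigma> * t) * \<sigma> * (1 - x))) / (D * D))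
     + \<sigma> * x * (1 - x) * (exp ((\<sigma> - m * f) * t) / D^2) - (m * f) * ((1 - x) * exp ((\<sigma> - m * f) * t) / D) = 0"
    by (rule Z_alg[where F = "exp (\<sigma> * t)"]) (use Dpos in \<open>simp_all add: D_def\<close>)
  then have "- ((exp ((\<sigma> - m * f) * t) * (\<sigma> - m * f) * (1 - x) * D - (1 - x) * exp ((\<sigma> - m * f) * t) * (exp (\<sigma> * t) * \<sigma> * (1 - x))) / (D * D))
     + \<sigma> * x * (1 - x) * (exp ((\<sigma> - m * f) * t) / D^2) - (m * f / 1) * (Z_one \<sigma> f m (x + 1 * (1 - x)) t - Z_one \<sigma> f m x t) = 0"
    unfolding z1 zx by simp
  then show ?thesis using dt dx by blast
qed

lemma X_den_pos:
  fixes \<sigma> f m x t :: real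
  assumes "\<sigma> > m * f" "\<sigma> > 0" "x \<le> 1" "t \<ge> 0"
  shows "1 + \<sigma> * (1 - x) / (\<sigma> - m * f) * (exp ((\<sigma> - m * f) * t) - 1) \<ge> 1"
proof -
  have "exp ((\<sigma> - m * f) * t) \<ge> 1" using assms by simp
  moreover have "\<sigma> * (1 - x) / (\<sigma> - m * f) \<ge> 0" using assms by simp
  ultimately have "\<sigma> * (1 - x) / (\<sigma> - m * f) * (exp ((\<sigma> - m * f) * t) - 1) \<ge> 0"
    by (intro mult_nonneg_nonneg) simp_all
  then show ?thesis by linarith
qed

lemma X_dt:
  fixes \<sigma> f m x t :: real
  assumes "\<sigma> > m * f" "\<sigma> > 0" "x \<le> 1" "t \<ge> 0"
  defines "D \<equiv> 1 + \<sigma> * (1 - x) / (\<sigma> - m * f) * (exp ((\<sigma> - m * f) * t) - 1)"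
  shows "((\<lambda>s. X_lim \<sigma> f m x s) has_real_derivative
     - ((x - m * f / \<sigma>) * (\<sigma> * (1 - x) / (\<sigma> - m * f) * (exp ((\<sigma> - m * f) * t) * (\<sigma> - m * f))) / (D * D))) (at t)"
proof -
  have "D \<ge> 1" using X_den_pos[OF assms(1-4)] by (simp add: D_def)
  then show ?thesis
    unfolding X_lim_def D_def
    by (auto intro!: derivative_eq_intros)
qed

lemma X_dx:
  fixes \<sigma> f m x t :: real
  assumes "\<sigma> > m * f" "\<sigma> > 0" "x \<le> 1" "t \<ge> 0"
  defines "D \<equiv> 1 + \<sigma> * (1 - x) / (\<sigma> - m * f) * (exp ((\<sigma> - m * f) * t) - 1)"
  shows "((\<lambda>y. X_lim \<sigma> f m y t) has_real_derivative
    (D - (x - m * f / \<sigma>) * (- (\<sigma> / (\<sigma> - m * f) * (exp ((\<sigma> - m * f) * t) - 1)))) / (D * D)) (at x)"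
proof -
  have "D \<ge> 1" using X_den_pos[OF assms(1-4)] by (simp add: D_def)
  then show ?thesis
    unfolding X_lim_def D_def using assms(1)
    by (auto intro!: derivative_eq_intros)
qed

lemma X_alg:
  fixes \<sigma> mf E x \<gamma> c p k D0 D1 \<phi> Xt Xx R :: real
  assumes s: "\<sigma> > 0" and c: "c = \<sigma> - mf" "c > 0" and mf: "mf \<ge> 0"
    and g: "0 < \<gamma>" "\<gamma> \<le> 1" and x: "0 \<le> x" "x \<le> 1" and E: "E \<ge> 1"
    and p: "p = mf / \<sigma>" and k: "k = \<sigma> / c * (E - 1)"
    and phi: "\<phi> = x + \<gamma> * (1 - x)"
    and D0: "D0 = 1 + \<sigma> * (1 - x) / c * (E - 1)"
    and D1: "D1 = 1 + \<sigma> * (1 - \<phi>) / c * (E - 1)"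
    and Xt: "Xt = - ((x - p) * (\<sigma> * (1 - x) / c * (E * c)) / (D0 * D0))"
    and Xx: "Xx = (D0 - (x - p) * (- (\<sigma> / c * (E - 1)))) / (D0 * D0)"
    and R: "R = Xt + \<sigma> * x * (1 - x) * Xx - (mf / \<gamma>) * ((p + (\<phi> - p) / D1) - (p + (x - p) / D0))"
  shows "R \<le> 0" "R \<ge> - (mf * E * k * \<gamma>)"
proof -
  have k0: "k \<ge> 0" using k c E s by simp
  have D0k: "D0 = 1 + k * (1 - x)" using D0 k by simp
  have D1k: "D1 = 1 + k * ((1 - \<gamma>) * (1 - x))" unfolding D1 k phi using c by (simp add: field_simps)
  have D0p: "D0 \<ge> 1" using D0k k0 x by simp
  have D1p: "D1 \<ge> 1" using D1k k0 x g by simp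
  have "k * (1 - p) = (E - 1) * ((\<sigma> - mf) / c)" unfolding k p using s c by (simp add: field_simps)
  then have kp: "k * (1 - p) = E - 1" using c by simp
  have Xx': "Xx = E / (D0 * D0)"
  proof -
    have "D0 - (x - p) * (- (\<sigma> / c * (E - 1))) = 1 + k * (1 - p)"
      unfolding D0 k using c by (simp add: field_simps)
    then show ?thesis using Xx kp by simp
  qed
  have Xt': "Xt = - ((x - p) * \<sigma> * (1 - x) * E / (D0 * D0))"
    using Xt c by simp
  have a: "Xt + \<sigma> * x * (1 - x) * Xx = mf * (1 - x) * E / (D0 * D0)"
  proof -
    have "Xt + \<sigma> * x * (1 - x) * Xx = \<sigma> * p * (1 - x) * E / (D0 * D0)"
      unfolding Xt' Xx' using D0p by (simp add: field_simps)
    then show ?thesis using p s by simp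
  qed
  have b: "(p + (\<phi> - p) / D1) - (p + (x - p) / D0) = \<gamma> * (1 - x) * E / (D0 * D1)"
  proof -
    have "(\<phi> - p) * D0 - (x - p) * D1 = \<gamma> * (1 - x) * (1 + k * (1 - p))"
      unfolding D0k D1k phi by (simp add: algebra_simps)
    then have "(\<phi> - p) * D0 - (x - p) * D1 = \<gamma> * (1 - x) * E" using kp by simp
    moreover have "(p + (\<phi> - p) / D1) - (p + (x - p) / D0) = ((\<phi> - p) * D0 - (x - p) * D1) / (D0 * D1)"
      using D0p D1p by (simp add: field_simps)
    ultimately show ?thesis by simp
  qed
  have Rf: "R = - (mf * (1 - x) * (1 - x) * E * k * \<gamma> / (D0 * D0 * D1))"
  proof -
    have "R = mf * (1 - x) * E / (D0 * D0) - mf * (1 - x) * E / (D0 * D1)"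
      unfolding R using a b g by (simp add: algebra_simps)
    also have "\<dots> = mf * (1 - x) * E * (D1 - D0) / (D0 * D0 * D1)"
      using D0p D1p by (simp add: field_simps)
    also have "D1 - D0 = - (k * \<gamma> * (1 - x))" unfolding D0k D1k by (simp add: algebra_simps)
    finally show ?thesis using D0p D1p by (simp add: field_simps)
  qed
  have num: "mf * (1 - x) * (1 - x) * E * k * \<gamma> \<ge> 0" using mf x E k0 g by simp
  have den: "D0 * D0 * D1 \<ge> 1"
  proof -
    have "D0 * D0 \<ge> 1 * 1" using mult_mono[OF D0p D0p] D0p by simp
    then show ?thesis using mult_mono[of 1 "D0 * D0" 1 D1] D1p by simp
  qed
  show "R \<le> 0" unfolding Rf using num den by simp
  have "mf * (1 - x) * (1 - x) * E * k * \<gamma> / (D0 * D0 * D1) \<le> mf * (1 - x) * (1 - x) * E * k * \<gamma>"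
    using num den by (simp add: divide_le_eq mult_le_cancel_left1)
  also have "\<dots> \<le> mf * E * k * \<gamma>"
  proof -
    have "(1 - x) * (1 - x) \<le> 1" using x by (simp add: mult_le_one)
    moreover have "mf * E * k * \<gamma> \<ge> 0" using mf E k0 g by simp
    ultimately show ?thesis using mult_left_mono[of "(1 - x) * (1 - x)" 1 "mf * E * k * \<gamma>"]
      by (simp add: algebra_simps)
  qed
  finally show "R \<ge> - (mf * E * k * \<gamma>)" unfolding Rf by simp
qed

lemma X_cont:
  fixes \<sigma> f m :: real
  assumes "\<sigma> > m * f" "\<sigma> > 0"
  shows "continuous_on ({0..1} \<times> {0..T}) (\<lambda>(x, t). X_lim \<sigma> f m x t)"
proof -
  have "\<forall>p\<in>{0..1} \<times> {0..T}. 1 + \<sigma> * (1 - fst p) / (\<sigma> - m * f) * (exp ((\<sigma> - m * f) * snd p) - 1) \<noteq> 0"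
    using X_den_pos[OF assms] by force
  then show ?thesis unfolding X_lim_def split_beta using assms(1)
    by (auto intro!: continuous_intros)
qed

lemma X_init: "X_lim \<sigma> f m x 0 = x"
  by (simp add: X_lim_def)

lemma X_resid:
  fixes \<sigma> f m :: real
  assumes "\<sigma> > m * f" "\<sigma> > 0" "m * f \<ge> 0" "0 < \<gamma>" "\<gamma> \<le> 1" "x \<in> {0..1}" "t > 0"
  shows "\<exists>Dx Dt. ((\<lambda>s. X_lim \<sigma> f m x s) has_real_derivative Dt) (at t within {0<..}) \<and>
        ((\<lambda>y. X_lim \<sigma> f m y t) has_real_derivative Dx) (at x within {0..1}) \<and>
        Dt + \<sigma> * x * (1 - x) * Dx - (m * f / \<gamma>) * (X_lim \<sigma> f m (x + \<gamma> * (1 - x)) t - X_lim \<sigma> f m x t) \<le> 0 \<and>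
        Dt + \<sigma> * x * (1 - x) * Dx - (m * f / \<gamma>) * (X_lim \<sigma> f m (x + \<gamma> * (1 - x)) t - X_lim \<sigma> f m x t)
          \<ge> - (m * f * exp ((\<sigma> - m * f) * t) * (\<sigma> / (\<sigma> - m * f) * (exp ((\<sigma> - m * f) * t) - 1)) * \<gamma>)"
proof -
  define D where "D = 1 + \<sigma> * (1 - x) / (\<sigma> - m * f) * (exp ((\<sigma> - m * f) * t) - 1)"
  have x1: "x \<le> 1" and t0: "t \<ge> 0" using assms by auto
  have dt: "((\<lambda>s. X_lim \<sigma> f m x s) has_real_derivative
     - ((x - m * f / \<sigma>) * (\<sigma> * (1 - x) / (\<sigma> - m * f) * (exp ((\<sigma> - m * f) * t) * (\<sigma> - m * f))) / (D * D))) (at t within {0<..})"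
    using X_dt[OF assms(1,2) x1 t0] unfolding D_def by (rule has_field_derivative_at_within)
  have dx: "((\<lambda>y. X_lim \<sigma> f m y t) has_real_derivative
    (D - (x - m * f / \<sigma>) * (- (\<sigma> / (\<sigma> - m * f) * (exp ((\<sigma> - m * f) * t) - 1)))) / (D * D)) (at x within {0..1})"
    using X_dx[OF assms(1,2) x1 t0] unfolding D_def by (rule has_field_derivative_at_within)
  have E: "exp ((\<sigma> - m * f) * t) \<ge> 1" using assms by simp
  note alg = X_alg[OF assms(2) refl _ assms(3) assms(4,5) _ x1 E refl refl refl D_def refl refl refl refl]
  have "0 \<le> x" using assms by simp
  then have alg': "- ((x - m * f / \<sigma>) * (\<sigma> * (1 - x) / (\<sigma> - m * f) * (exp ((\<sigma> - m * f) * t) * (\<sigma> - m * f))) / (D * D))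
     + \<sigma> * x * (1 - x) * ((D - (x - m * f / \<sigma>) * (- (\<sigma> / (\<sigma> - m * f) * (exp ((\<sigma> - m * f) * t) - 1)))) / (D * D))
     - (m * f / \<gamma>) * (X_lim \<sigma> f m (x + \<gamma> * (1 - x)) t - X_lim \<sigma> f m x t) \<le> 0 \<and>
     - ((x - m * f / \<sigma>) * (\<sigma> * (1 - x) / (\<sigma> - m * f) * (exp ((\<sigma> - m * f) * t) * (\<sigma> - m * f))) / (D * D))
     + \<sigma> * x * (1 - x) * ((D - (x - m * f / \<sigma>) * (- (\<sigma> / (\<sigma> - m * f) * (exp ((\<sigma> - m * f) * t) - 1)))) / (D * D))
     - (m * f / \<gamma>) * (X_lim \<sigma> f m (x + \<gamma> * (1 - x)) t - X_lim \<sigma> f m x t)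
      \<ge> - (m * f * exp ((\<sigma> - m * f) * t) * (\<sigma> / (\<sigma> - m * f) * (exp ((\<sigma> - m * f) * t) - 1)) * \<gamma>)"
    using alg assms(1) unfolding X_lim_def D_def by simp
  show ?thesis using dt dx alg' by blast
qed

lemma compact_tri: "compact (({0..1} \<times> {0..1}) \<inter> {p :: real \<times> real. fst p \<le> snd p})"
  by (intro compact_Int_closed compact_Times compact_Icc closed_Collect_le continuous_intros)

lemma sol_mono_x:
  fixes v :: "real \<Rightarrow> real \<Rightarrow> real"
  assumes vs: "is_solution \<sigma> f m \<gamma> v" and g: "0 < \<gamma>" "\<gamma> \<le> 1" and mf: "m * f \<ge> 0"
    and xz: "x \<le> z" "0 \<le> x" "z \<le> 1" and t: "t \<ge> 0"
  shows "v x t \<le> v z t"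
proof (rule ccontr)
  assume "\<not> v x t \<le> v z t"
  then have pos: "v x t - v z t > 0" by simp
  define \<epsilon> where "\<epsilon> = (v x t - v z t) / (2 * (t + 1))"
  have ep: "\<epsilon> > 0" using pos t by (simp add: \<epsilon>_def)
  have "\<epsilon> * (t + 1) = (v x t - v z t) / 2"
    using t unfolding \<epsilon>_def by (simp add: field_simps add_pos_pos)
  then have Gxt: "v x t - v z t - \<epsilon> * (1 + t) > 0" using pos by (simp add: algebra_simps)
  define S where "S = (({0..1} \<times> {0..1}) \<inter> {p :: real \<times> real. fst p \<le> snd p}) \<times> {0..t}"
  define G where "G = (\<lambda>((a, b), s). v a s - v b s - \<epsilon> * (1 + s))"
  have cv: "continuous_on ({0..1} \<times> {0..t}) (\<lambda>(x, t). v x t)" by (rule sol_cont[OF vs])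
  have cG: "continuous_on S G"
  proof -
    have c1: "continuous_on S (\<lambda>p. (\<lambda>(x, t). v x t) (fst (fst p), snd p))"
      by (rule continuous_on_compose2[OF cv]) (auto intro!: continuous_intros simp: S_def)
    have c2: "continuous_on S (\<lambda>p. (\<lambda>(x, t). v x t) (snd (fst p), snd p))"
      by (rule continuous_on_compose2[OF cv]) (auto intro!: continuous_intros simp: S_def)
    have "continuous_on S (\<lambda>p. (\<lambda>(x, t). v x t) (fst (fst p), snd p) - (\<lambda>(x, t). v x t) (snd (fst p), snd p) - \<epsilon> * (1 + snd p))"
      by (intro continuous_intros c1 c2)
    then show ?thesis unfolding G_def by (simp add: split_beta)
  qed
  have cS: "compact S" unfolding S_def by (intro compact_Times compact_tri compact_Icc)
  have xzS: "((x, z), t) \<in> S" using xz t by (auto simp: S_def)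
  have "\<exists>p\<in>S. \<forall>q\<in>S. G q \<le> G p"
    by (rule continuous_attains_sup[OF cS _ cG]) (use xzS in auto)
  then obtain p where pS: "p \<in> S" and pmax: "\<forall>q\<in>S. G q \<le> G p" by blast
  obtain a0 b0 s0 where p_eq: "p = ((a0, b0), s0)" by (metis prod.collapse)
  have a0: "0 \<le> a0" "a0 \<le> b0" "b0 \<le> 1" and s0: "0 \<le> s0" "s0 \<le> t" using pS p_eq by (auto simp: S_def)
  have Gp: "G p > 0" using pmax[rule_format, OF xzS] Gxt by (simp add: G_def)
  have Gp': "v a0 s0 - v b0 s0 - \<epsilon> * (1 + s0) > 0" using Gp by (simp add: G_def p_eq)
  have "s0 \<noteq> 0"
  proof
    assume "s0 = 0"
    then have "v a0 s0 - v b0 s0 = a0 - b0" using sol_init[OF vs] a0 by simp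
    then show False using Gp' a0 ep s0 by (smt (verit) mult_nonneg_nonneg)
  qed
  then have s0p: "s0 > 0" using s0 by simp
  have "a0 \<noteq> b0"
  proof
    assume "a0 = b0" then show False using Gp' ep s0 by (smt (verit) mult_nonneg_nonneg)
  qed
  then have ab: "a0 < b0" using a0 by simp
  have a0i: "a0 \<in> {0..1}" and b0i: "b0 \<in> {0..1}" using a0 by auto
  obtain Dxa Dta where ta: "((\<lambda>s. v a0 s) has_real_derivative Dta) (at s0 within {0<..})"
    and xa: "((\<lambda>y. v y s0) has_real_derivative Dxa) (at a0 within {0..1})"
    and ea: "Dta + \<sigma> * a0 * (1 - a0) * Dxa = (m * f / \<gamma>) * (v (a0 + \<gamma> * (1 - a0)) s0 - v a0 s0)"
    using sol_partials[OF vs a0i s0p] by blast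
  obtain Dxb Dtb where tb: "((\<lambda>s. v b0 s) has_real_derivative Dtb) (at s0 within {0<..})"
    and xb: "((\<lambda>y. v y s0) has_real_derivative Dxb) (at b0 within {0..1})"
    and eb: "Dtb + \<sigma> * b0 * (1 - b0) * Dxb = (m * f / \<gamma>) * (v (b0 + \<gamma> * (1 - b0)) s0 - v b0 s0)"
    using sol_partials[OF vs b0i s0p] by blast
  have h1: "((\<lambda>s. v a0 s - v b0 s - \<epsilon> * (1 + s)) has_real_derivative Dta - Dtb - \<epsilon>) (at s0 within {0<..})"
    by (auto intro!: derivative_eq_intros ta tb)
  have h2: "\<forall>s\<in>{0<..s0}. v a0 s - v b0 s - \<epsilon> * (1 + s) \<le> v a0 s0 - v b0 s0 - \<epsilon> * (1 + s0)"
  proof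
    fix s assume "s \<in> {0<..s0}"
    then have "((a0, b0), s) \<in> S" using a0 s0 by (auto simp: S_def)
    from pmax[rule_format, OF this] show "v a0 s - v b0 s - \<epsilon> * (1 + s) \<le> v a0 s0 - v b0 s0 - \<epsilon> * (1 + s0)"
      by (simp add: G_def p_eq)
  qed
  have T1: "Dta - Dtb - \<epsilon> \<ge> 0" using deriv_left_max[OF h1 s0p h2] by simp
  have A: "\<sigma> * a0 * (1 - a0) * Dxa = 0"
  proof (cases "a0 = 0")
    case False
    then have a0p: "0 < a0" using a0 by simp
    have dd: "((\<lambda>y. v y s0) has_real_derivative Dxa) (at a0)"
      using deriv_interior[OF xa] a0p ab a0 by simp
    have "\<forall>y. \<bar>a0 - y\<bar> < min a0 (b0 - a0) \<longrightarrow> v y s0 \<le> v a0 s0"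
    proof (intro allI impI)
      fix y assume "\<bar>a0 - y\<bar> < min a0 (b0 - a0)"
      then have "((y, b0), s0) \<in> S" using a0 s0 by (auto simp: S_def)
      from pmax[rule_format, OF this] show "v y s0 \<le> v a0 s0" by (simp add: G_def p_eq)
    qed
    then have "Dxa = 0" using a0p ab by (intro DERIV_local_max[OF dd, of "min a0 (b0 - a0)"]) auto
    then show ?thesis by simp
  qed simp
  have B: "\<sigma> * b0 * (1 - b0) * Dxb = 0"
  proof (cases "b0 = 1")
    case False
    then have b0p: "b0 < 1" using a0 by simp
    have dd: "((\<lambda>y. v y s0) has_real_derivative Dxb) (at b0)"
      using deriv_interior[OF xb] b0p ab a0 by simp
    have "\<forall>y. \<bar>b0 - y\<bar> < min (1 - b0) (b0 - a0) \<longrightarrow> v b0 s0 \<le> v y s0"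
    proof (intro allI impI)
      fix y assume "\<bar>b0 - y\<bar> < min (1 - b0) (b0 - a0)"
      then have "((a0, y), s0) \<in> S" using a0 s0 by (auto simp: S_def)
      from pmax[rule_format, OF this] show "v b0 s0 \<le> v y s0" by (simp add: G_def p_eq)
    qed
    then have "Dxb = 0" using b0p ab by (intro DERIV_local_min[OF dd, of "min (1 - b0) (b0 - a0)"]) auto
    then show ?thesis by simp
  qed simp
  have J: "v (a0 + \<gamma> * (1 - a0)) s0 - v (b0 + \<gamma> * (1 - b0)) s0 \<le> v a0 s0 - v b0 s0"
  proof -
    have "a0 + \<gamma> * (1 - a0) \<le> b0 + \<gamma> * (1 - b0)"
    proof -
      have "(1 - \<gamma>) * a0 \<le> (1 - \<gamma>) * b0" using g a0 by (intro mult_left_mono) auto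
      then show ?thesis by (simp add: algebra_simps)
    qed
    then have "((a0 + \<gamma> * (1 - a0), b0 + \<gamma> * (1 - b0)), s0) \<in> S"
      using phi_in[OF g a0i] phi_in[OF g b0i] s0 by (auto simp: S_def)
    from pmax[rule_format, OF this] show ?thesis by (simp add: G_def p_eq)
  qed
  have "Dta - Dtb = (m * f / \<gamma>) * ((v (a0 + \<gamma> * (1 - a0)) s0 - v (b0 + \<gamma> * (1 - b0)) s0) - (v a0 s0 - v b0 s0))"
  proof -
    have ea': "Dta = (m * f / \<gamma>) * (v (a0 + \<gamma> * (1 - a0)) s0 - v a0 s0)" using ea A by linarith
    have eb': "Dtb = (m * f / \<gamma>) * (v (b0 + \<gamma> * (1 - b0)) s0 - v b0 s0)" using eb B by linarith
    show ?thesis unfolding ea' eb' by (simp add: right_diff_distrib)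
  qed
  also have "\<dots> \<le> 0" using J mf g by (intro mult_nonneg_nonpos) auto
  finally show False using T1 ep by linarith
qed

lemma deriv_right_mono:
  fixes h :: "real \<Rightarrow> real"
  assumes d: "(h has_real_derivative d) (at t)" and e: "e > 0"
    and mn: "\<forall>s\<in>{t<..<t+e}. h t \<le> h s"
  shows "d \<ge> 0"
proof -
  have "((\<lambda>y. (h y - h t) / (y - t)) \<longlongrightarrow> d) (at t)"
    using d by (simp add: has_field_derivative_iff)
  then have lim: "((\<lambda>y. (h y - h t) / (y - t)) \<longlongrightarrow> d) (at t within {t<..<t+e})"
    by (rule tendsto_within_subset) auto
  have nt: "at t within {t<..<t+e} \<noteq> bot"
    using e by (simp add: at_within_eq_bot_iff)
  have ev: "eventually (\<lambda>y. (h y - h t) / (y - t) \<ge> 0) (at t within {t<..<t+e})"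
    unfolding eventually_at_filter
    using mn by (auto intro!: always_eventually divide_nonneg_pos)
  show ?thesis using tendsto_lowerbound[OF lim ev nt] .
qed

lemma conv01:
  fixes a b l :: real
  assumes "0 \<le> a" "a \<le> 1" "0 \<le> b" "b \<le> 1" "0 \<le> l" "l \<le> 1"
  shows "l * a + (1 - l) * b \<in> {0..1}"
proof -
  have "0 \<le> l * a + (1 - l) * b" using assms by simp
  moreover have "l * a + (1 - l) * b \<le> l * 1 + (1 - l) * 1"
    using assms by (intro add_mono mult_left_mono) auto
  ultimately show ?thesis by simp
qed

lemma sol_convex:
  fixes v :: "real \<Rightarrow> real \<Rightarrow> real"
  assumes vs: "is_solution \<sigma> f m \<gamma> v" and g: "0 < \<gamma>" "\<gamma> \<le> 1" and mf: "m * f \<ge> 0" and sg: "\<sigma> \<ge> 0"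
    and xz: "x \<le> z" "0 \<le> x" "z \<le> 1" and l: "0 \<le> l" "l \<le> 1" and t: "t \<ge> 0"
  shows "v (l * x + (1 - l) * z) t \<le> l * v x t + (1 - l) * v z t"
proof (rule ccontr)
  assume "\<not> ?thesis"
  then have pos: "v (l * x + (1 - l) * z) t - l * v x t - (1 - l) * v z t > 0" by simp
  define \<epsilon> where "\<epsilon> = (v (l * x + (1 - l) * z) t - l * v x t - (1 - l) * v z t) / (2 * (t + 1))"
  have ep: "\<epsilon> > 0" using pos t by (simp add: \<epsilon>_def)
  have "\<epsilon> * (t + 1) = (v (l * x + (1 - l) * z) t - l * v x t - (1 - l) * v z t) / 2"
    using t unfolding \<epsilon>_def by (simp add: field_simps add_pos_pos)
  then have Gxt: "v (l * x + (1 - l) * z) t - l * v x t - (1 - l) * v z t - \<epsilon> * (1 + t) > 0"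
    using pos by (simp add: algebra_simps)
  define S where "S = ((({0..1} \<times> {0..1}) \<inter> {p :: real \<times> real. fst p \<le> snd p}) \<times> {0..(1::real)}) \<times> {0..t}"
  define G where "G = (\<lambda>(((a, b), l), s). v (l * a + (1 - l) * b) s - l * v a s - (1 - l) * v b s - \<epsilon> * (1 + s))"
  have cv: "continuous_on ({0..1} \<times> {0..t}) (\<lambda>(x, t). v x t)" by (rule sol_cont[OF vs])
  have cG: "continuous_on S G"
  proof -
    have c1: "continuous_on S (\<lambda>p. (\<lambda>(x, t). v x t) (snd (fst p) * fst (fst (fst p)) + (1 - snd (fst p)) * snd (fst (fst p)), snd p))"
      by (rule continuous_on_compose2[OF cv]) (auto intro!: continuous_intros conv01 simp: S_def)
    have c2: "continuous_on S (\<lambda>p. (\<lambda>(x, t). v x t) (fst (fst (fst p)), snd p))"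
      by (rule continuous_on_compose2[OF cv]) (auto intro!: continuous_intros simp: S_def)
    have c3: "continuous_on S (\<lambda>p. (\<lambda>(x, t). v x t) (snd (fst (fst p)), snd p))"
      by (rule continuous_on_compose2[OF cv]) (auto intro!: continuous_intros simp: S_def)
    have "continuous_on S (\<lambda>p. (\<lambda>(x, t). v x t) (snd (fst p) * fst (fst (fst p)) + (1 - snd (fst p)) * snd (fst (fst p)), snd p)
       - snd (fst p) * (\<lambda>(x, t). v x t) (fst (fst (fst p)), snd p) - (1 - snd (fst p)) * (\<lambda>(x, t). v x t) (snd (fst (fst p)), snd p) - \<epsilon> * (1 + snd p))"
      by (intro continuous_intros c1 c2 c3)
    then show ?thesis unfolding G_def by (simp add: split_beta)
  qed
  have cS: "compact S" unfolding S_def by (intro compact_Times compact_tri compact_Icc)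
  have xzS: "(((x, z), l), t) \<in> S" using xz t l by (auto simp: S_def)
  have "\<exists>p\<in>S. \<forall>q\<in>S. G q \<le> G p"
    by (rule continuous_attains_sup[OF cS _ cG]) (use xzS in auto)
  then obtain p where pS: "p \<in> S" and pmax: "\<forall>q\<in>S. G q \<le> G p" by blast
  obtain a0 b0 l0 s0 where p_eq: "p = (((a0, b0), l0), s0)" by (metis prod.collapse)
  have a0: "0 \<le> a0" "a0 \<le> b0" "b0 \<le> 1" and l0: "0 \<le> l0" "l0 \<le> 1" and s0: "0 \<le> s0" "s0 \<le> t"
    using pS p_eq by (auto simp: S_def)
  define m0 where "m0 = l0 * a0 + (1 - l0) * b0"
  have Gp: "G p > 0" using pmax[rule_format, OF xzS] Gxt by (simp add: G_def)
  have Gp': "v m0 s0 - l0 * v a0 s0 - (1 - l0) * v b0 s0 - \<epsilon> * (1 + s0) > 0"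
    using Gp by (simp add: G_def p_eq m0_def)
  have a0i: "a0 \<in> {0..1}" and b0i: "b0 \<in> {0..1}" using a0 by auto
  have m0i: "m0 \<in> {0..1}" unfolding m0_def using a0 l0 by (intro conv01) auto
  have e1: "\<epsilon> * (1 + s0) > 0" using ep s0 by simp
  have "s0 \<noteq> 0"
  proof
    assume "s0 = 0"
    then have "v m0 s0 - l0 * v a0 s0 - (1 - l0) * v b0 s0 = 0"
      using sol_init[OF vs a0i] sol_init[OF vs b0i] sol_init[OF vs m0i] by (simp add: m0_def)
    then show False using Gp' e1 by linarith
  qed
  then have s0p: "s0 > 0" using s0 by simp
  have "a0 \<noteq> b0"
  proof
    assume "a0 = b0"
    then have "m0 = a0" by (simp add: m0_def algebra_simps)
    then have "v m0 s0 - l0 * v a0 s0 - (1 - l0) * v b0 s0 = 0" using \<open>a0 = b0\<close> by (simp add: algebra_simps)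
    then show False using Gp' e1 by linarith
  qed
  then have ab: "a0 < b0" using a0 by simp
  have "l0 \<noteq> 0"
  proof
    assume "l0 = 0"
    then have "v m0 s0 - l0 * v a0 s0 - (1 - l0) * v b0 s0 = 0" by (simp add: m0_def)
    then show False using Gp' e1 by linarith
  qed
  moreover have "l0 \<noteq> 1"
  proof
    assume "l0 = 1"
    then have "v m0 s0 - l0 * v a0 s0 - (1 - l0) * v b0 s0 = 0" by (simp add: m0_def)
    then show False using Gp' e1 by linarith
  qed
  ultimately have l0p: "0 < l0" "l0 < 1" using l0 by auto
  have ma: "m0 - a0 = (1 - l0) * (b0 - a0)" by (simp add: m0_def algebra_simps)
  have bm: "b0 - m0 = l0 * (b0 - a0)" by (simp add: m0_def algebra_simps)
  have "(1 - l0) * (b0 - a0) > 0" using ab l0p by simp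
  then have am: "a0 < m0" using ma by linarith
  have "l0 * (b0 - a0) > 0" using ab l0p by simp
  then have mb: "m0 < b0" using bm by linarith
  obtain Dxa Dta where ta: "((\<lambda>s. v a0 s) has_real_derivative Dta) (at s0 within {0<..})"
    and xa: "((\<lambda>y. v y s0) has_real_derivative Dxa) (at a0 within {0..1})"
    and ea: "Dta + \<sigma> * a0 * (1 - a0) * Dxa = (m * f / \<gamma>) * (v (a0 + \<gamma> * (1 - a0)) s0 - v a0 s0)"
    using sol_partials[OF vs a0i s0p] by blast
  obtain Dxb Dtb where tb: "((\<lambda>s. v b0 s) has_real_derivative Dtb) (at s0 within {0<..})"
    and xb: "((\<lambda>y. v y s0) has_real_derivative Dxb) (at b0 within {0..1})"
    and eb: "Dtb + \<sigma> * b0 * (1 - b0) * Dxb = (m * f / \<gamma>) * (v (b0 + \<gamma> * (1 - b0)) s0 - v b0 s0)"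
    using sol_partials[OF vs b0i s0p] by blast
  obtain Dxm Dtm where tm: "((\<lambda>s. v m0 s) has_real_derivative Dtm) (at s0 within {0<..})"
    and xm: "((\<lambda>y. v y s0) has_real_derivative Dxm) (at m0 within {0..1})"
    and em: "Dtm + \<sigma> * m0 * (1 - m0) * Dxm = (m * f / \<gamma>) * (v (m0 + \<gamma> * (1 - m0)) s0 - v m0 s0)"
    using sol_partials[OF vs m0i s0p] by blast
  have dm: "((\<lambda>y. v y s0) has_real_derivative Dxm) (at m0)"
    using deriv_interior[OF xm] am mb a0 by simp
  have h1: "((\<lambda>s. v m0 s - l0 * v a0 s - (1 - l0) * v b0 s - \<epsilon> * (1 + s)) has_real_derivative
      Dtm - l0 * Dta - (1 - l0) * Dtb - \<epsilon>) (at s0 within {0<..})"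
    by (auto intro!: derivative_eq_intros ta tb tm)
  have h2: "\<forall>s\<in>{0<..s0}. v m0 s - l0 * v a0 s - (1 - l0) * v b0 s - \<epsilon> * (1 + s) \<le> v m0 s0 - l0 * v a0 s0 - (1 - l0) * v b0 s0 - \<epsilon> * (1 + s0)"
  proof
    fix s assume "s \<in> {0<..s0}"
    then have "(((a0, b0), l0), s) \<in> S" using a0 l0 s0 by (auto simp: S_def)
    from pmax[rule_format, OF this] show "v m0 s - l0 * v a0 s - (1 - l0) * v b0 s - \<epsilon> * (1 + s) \<le> v m0 s0 - l0 * v a0 s0 - (1 - l0) * v b0 s0 - \<epsilon> * (1 + s0)"
      by (simp add: G_def p_eq m0_def)
  qed
  have T1: "Dtm - l0 * Dta - (1 - l0) * Dtb - \<epsilon> \<ge> 0" using deriv_left_max[OF h1 s0p h2] .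
  have A: "\<sigma> * a0 * (1 - a0) * Dxa = \<sigma> * a0 * (1 - a0) * Dxm"
  proof (cases "a0 = 0")
    case False
    then have a0p: "0 < a0" using a0 by simp
    have dd: "((\<lambda>y. v y s0) has_real_derivative Dxa) (at a0)"
      using deriv_interior[OF xa] a0p ab a0 by simp
    have inner: "((\<lambda>y. l0 * y + (1 - l0) * b0) has_real_derivative l0) (at a0)"
      by (auto intro!: derivative_eq_intros)
    have ch: "((\<lambda>y. v (l0 * y + (1 - l0) * b0) s0) has_real_derivative Dxm * l0) (at a0)"
      using DERIV_chain2[of "\<lambda>y. v y s0", OF _ inner] dm by (simp add: m0_def)
    have F: "((\<lambda>y. v (l0 * y + (1 - l0) * b0) s0 - l0 * v y s0) has_real_derivative Dxm * l0 - l0 * Dxa) (at a0)"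
      by (intro DERIV_diff ch DERIV_cmult dd)
    have "\<forall>y. \<bar>a0 - y\<bar> < min a0 (b0 - a0) \<longrightarrow> v (l0 * y + (1 - l0) * b0) s0 - l0 * v y s0 \<le> v (l0 * a0 + (1 - l0) * b0) s0 - l0 * v a0 s0"
    proof (intro allI impI)
      fix y assume "\<bar>a0 - y\<bar> < min a0 (b0 - a0)"
      then have "(((y, b0), l0), s0) \<in> S" using a0 l0 s0 by (auto simp: S_def)
      from pmax[rule_format, OF this] show "v (l0 * y + (1 - l0) * b0) s0 - l0 * v y s0 \<le> v (l0 * a0 + (1 - l0) * b0) s0 - l0 * v a0 s0"
        by (simp add: G_def p_eq)
    qed
    then have "Dxm * l0 - l0 * Dxa = 0" using a0p ab by (intro DERIV_local_max[OF F, of "min a0 (b0 - a0)"]) auto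
    then have "Dxa = Dxm" using l0p by (simp add: algebra_simps)
    then show ?thesis by simp
  qed simp
  have B: "\<sigma> * b0 * (1 - b0) * Dxb = \<sigma> * b0 * (1 - b0) * Dxm"
  proof (cases "b0 = 1")
    case False
    then have b0p: "b0 < 1" using a0 by simp
    have dd: "((\<lambda>y. v y s0) has_real_derivative Dxb) (at b0)"
      using deriv_interior[OF xb] b0p ab a0 by simp
    have inner: "((\<lambda>y. l0 * a0 + (1 - l0) * y) has_real_derivative (1 - l0)) (at b0)"
      by (auto intro!: derivative_eq_intros)
    have ch: "((\<lambda>y. v (l0 * a0 + (1 - l0) * y) s0) has_real_derivative Dxm * (1 - l0)) (at b0)"
      using DERIV_chain2[of "\<lambda>y. v y s0", OF _ inner] dm by (simp add: m0_def)
    have F: "((\<lambda>y. v (l0 * a0 + (1 - l0) * y) s0 - (1 - l0) * v y s0) has_real_derivative Dxm * (1 - l0) - (1 - l0) * Dxb) (at b0)"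
      by (intro DERIV_diff ch DERIV_cmult dd)
    have "\<forall>y. \<bar>b0 - y\<bar> < min (1 - b0) (b0 - a0) \<longrightarrow> v (l0 * a0 + (1 - l0) * y) s0 - (1 - l0) * v y s0 \<le> v (l0 * a0 + (1 - l0) * b0) s0 - (1 - l0) * v b0 s0"
    proof (intro allI impI)
      fix y assume "\<bar>b0 - y\<bar> < min (1 - b0) (b0 - a0)"
      then have "(((a0, y), l0), s0) \<in> S" using a0 l0 s0 by (auto simp: S_def)
      from pmax[rule_format, OF this] show "v (l0 * a0 + (1 - l0) * y) s0 - (1 - l0) * v y s0 \<le> v (l0 * a0 + (1 - l0) * b0) s0 - (1 - l0) * v b0 s0"
        by (simp add: G_def p_eq)
    qed
    then have "Dxm * (1 - l0) - (1 - l0) * Dxb = 0" using b0p ab by (intro DERIV_local_max[OF F, of "min (1 - b0) (b0 - a0)"]) auto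
    then have "(1 - l0) * (Dxm - Dxb) = 0" by (simp add: algebra_simps)
    then have "Dxb = Dxm" using l0p by simp
    then show ?thesis by simp
  qed simp
  have Dxm0: "Dxm \<ge> 0"
  proof (rule deriv_right_mono[OF dm])
    show "1 - m0 > 0" using mb a0 by simp
    show "\<forall>s\<in>{m0<..<m0 + (1 - m0)}. v m0 s0 \<le> v s s0"
      using sol_mono_x[OF vs g mf _ _ _ s0(1)] am a0 by auto
  qed
  have conc: "\<sigma> * m0 * (1 - m0) - l0 * (\<sigma> * a0 * (1 - a0)) - (1 - l0) * (\<sigma> * b0 * (1 - b0)) = \<sigma> * l0 * (1 - l0) * (b0 - a0)^2"
    by (simp add: m0_def algebra_simps power2_eq_square)
  have concp: "\<sigma> * l0 * (1 - l0) * (b0 - a0)^2 \<ge> 0" using sg l0p by simp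
  define pa where "pa = a0 + \<gamma> * (1 - a0)"
  define pb where "pb = b0 + \<gamma> * (1 - b0)"
  have pm: "m0 + \<gamma> * (1 - m0) = l0 * pa + (1 - l0) * pb" by (simp add: m0_def pa_def pb_def algebra_simps)
  have J: "v (l0 * pa + (1 - l0) * pb) s0 - l0 * v pa s0 - (1 - l0) * v pb s0 \<le> v m0 s0 - l0 * v a0 s0 - (1 - l0) * v b0 s0"
  proof -
    have "pa \<le> pb"
    proof -
      have "(1 - \<gamma>) * a0 \<le> (1 - \<gamma>) * b0" using g a0 by (intro mult_left_mono) auto
      then show ?thesis by (simp add: pa_def pb_def algebra_simps)
    qed
    then have "(((pa, pb), l0), s0) \<in> S"
      using phi_in[OF g a0i] phi_in[OF g b0i] s0 l0 by (auto simp: S_def pa_def pb_def)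
    from pmax[rule_format, OF this] show ?thesis by (simp add: G_def p_eq m0_def)
  qed
  define r where "r = m * f / \<gamma>"
  have r0: "r \<ge> 0" using mf g by (simp add: r_def)
  have eqa: "Dta = r * (v pa s0 - v a0 s0) - \<sigma> * a0 * (1 - a0) * Dxm" using ea A unfolding r_def pa_def by linarith
  have eqb: "Dtb = r * (v pb s0 - v b0 s0) - \<sigma> * b0 * (1 - b0) * Dxm" using eb B unfolding r_def pb_def by linarith
  have eqm: "Dtm = r * (v (l0 * pa + (1 - l0) * pb) s0 - v m0 s0) - \<sigma> * m0 * (1 - m0) * Dxm"
    using em unfolding r_def pm by linarith
  have "Dtm - l0 * Dta - (1 - l0) * Dtb =
      r * ((v (l0 * pa + (1 - l0) * pb) s0 - l0 * v pa s0 - (1 - l0) * v pb s0) - (v m0 s0 - l0 * v a0 s0 - (1 - l0) * v b0 s0))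
      - (\<sigma> * m0 * (1 - m0) - l0 * (\<sigma> * a0 * (1 - a0)) - (1 - l0) * (\<sigma> * b0 * (1 - b0))) * Dxm"
    unfolding eqa eqb eqm by (simp add: algebra_simps)
  also have "\<dots> \<le> 0"
  proof -
    have "r * ((v (l0 * pa + (1 - l0) * pb) s0 - l0 * v pa s0 - (1 - l0) * v pb s0) - (v m0 s0 - l0 * v a0 s0 - (1 - l0) * v b0 s0)) \<le> 0"
      using r0 J by (intro mult_nonneg_nonpos) auto
    moreover have "(\<sigma> * m0 * (1 - m0) - l0 * (\<sigma> * a0 * (1 - a0)) - (1 - l0) * (\<sigma> * b0 * (1 - b0))) * Dxm \<ge> 0"
      unfolding conc using concp Dxm0 by simp
    ultimately show ?thesis by linarith
  qed
  finally show False using T1 ep by linarith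
qed

lemma gamma_mono:
  fixes u1 u2 :: "real \<Rightarrow> real \<Rightarrow> real"
  assumes s1: "is_solution \<sigma> f m \<gamma>1 u1" and s2: "is_solution \<sigma> f m \<gamma>2 u2"
    and g: "0 < \<gamma>1" "\<gamma>1 \<le> \<gamma>2" "\<gamma>2 \<le> 1" and mf: "m * f \<ge> 0" and sg: "\<sigma> \<ge> 0"
    and x: "x \<in> {0..1}" and t: "t \<ge> 0"
  shows "u1 x t \<le> u2 x t"
proof -
  have WD: "\<forall>x\<in>{0..1}. \<forall>s\<in>{0<..t}. \<exists>Dx Dt.
        ((\<lambda>s. u2 x s) has_real_derivative Dt) (at s within {0<..}) \<and>
        ((\<lambda>y. u2 y s) has_real_derivative Dx) (at x within {0..1}) \<and>
        1 * (Dt + \<sigma> * x * (1 - x) * Dx - (m * f / \<gamma>1) * (u2 (x + \<gamma>1 * (1 - x)) s - u2 x s)) \<ge> - 0"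
  proof (intro ballI)
    fix x s :: real assume x: "x \<in> {0..1}" and s: "s \<in> {0<..t}"
    then have sp: "s > 0" by simp
    obtain Dx Dt where a1: "((\<lambda>s. u2 x s) has_real_derivative Dt) (at s within {0<..})"
      and a2: "((\<lambda>y. u2 y s) has_real_derivative Dx) (at x within {0..1})"
      and a3: "Dt + \<sigma> * x * (1 - x) * Dx = (m * f / \<gamma>2) * (u2 (x + \<gamma>2 * (1 - x)) s - u2 x s)"
      using sol_partials[OF s2 x sp] by blast
    define l where "l = 1 - \<gamma>1 / \<gamma>2"
    have l: "0 \<le> l" "l \<le> 1" using g by (auto simp: l_def field_simps)
    have p2: "x + \<gamma>2 * (1 - x) \<in> {0..1}" using phi_in[of \<gamma>2 x] g x by simp
    have xle: "x \<le> x + \<gamma>2 * (1 - x)" using g x by simp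
    have cv: "u2 (l * x + (1 - l) * (x + \<gamma>2 * (1 - x))) s \<le> l * u2 x s + (1 - l) * u2 (x + \<gamma>2 * (1 - x)) s"
      by (rule sol_convex[OF s2 _ _ mf sg xle _ _ l]) (use g x p2 sp in auto)
    have eqm: "l * x + (1 - l) * (x + \<gamma>2 * (1 - x)) = x + \<gamma>1 * (1 - x)"
      using g by (simp add: l_def field_simps)
    have "u2 (x + \<gamma>1 * (1 - x)) s - u2 x s \<le> (1 - l) * (u2 (x + \<gamma>2 * (1 - x)) s - u2 x s)"
      using cv unfolding eqm by (simp add: algebra_simps)
    moreover have "1 - l = \<gamma>1 / \<gamma>2" by (simp add: l_def)
    ultimately have c: "u2 (x + \<gamma>1 * (1 - x)) s - u2 x s \<le> (\<gamma>1 / \<gamma>2) * (u2 (x + \<gamma>2 * (1 - x)) s - u2 x s)"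
      by simp
    have "(m * f / \<gamma>1) * (u2 (x + \<gamma>1 * (1 - x)) s - u2 x s) \<le> (m * f / \<gamma>1) * ((\<gamma>1 / \<gamma>2) * (u2 (x + \<gamma>2 * (1 - x)) s - u2 x s))"
      using c mf g by (intro mult_left_mono) auto
    also have "\<dots> = (m * f / \<gamma>2) * (u2 (x + \<gamma>2 * (1 - x)) s - u2 x s)" using g by simp
    finally have "1 * (Dt + \<sigma> * x * (1 - x) * Dx - (m * f / \<gamma>1) * (u2 (x + \<gamma>1 * (1 - x)) s - u2 x s)) \<ge> - 0"
      using a3 by simp
    then show "\<exists>Dx Dt.
        ((\<lambda>s. u2 x s) has_real_derivative Dt) (at s within {0<..}) \<and>
        ((\<lambda>y. u2 y s) has_real_derivative Dx) (at x within {0..1}) \<and>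
        1 * (Dt + \<sigma> * x * (1 - x) * Dx - (m * f / \<gamma>1) * (u2 (x + \<gamma>1 * (1 - x)) s - u2 x s)) \<ge> - 0"
      using a1 a2 by blast
  qed
  have "1 * (u1 x t - u2 x t) \<le> 0 * t"
    by (rule sol_vs_W[OF s1 g(1) _ mf sol_cont[OF s2] _ WD _ x]) (use g sol_init[OF s2] t in auto)
  then show ?thesis by simp
qed

lemma u1_Z:
  fixes v :: "real \<Rightarrow> real \<Rightarrow> real"
  assumes vs: "is_solution \<sigma> f m 1 v" and sg: "\<sigma> > 0" and mf: "m * f \<ge> 0"
    and x: "x \<in> {0..1}" and t: "t \<ge> 0"
  shows "v x t = Z_one \<sigma> f m x t"
proof -
  have WD: "\<And>c. c = 1 \<or> c = -1 \<Longrightarrow> \<forall>x\<in>{0..1}. \<forall>s\<in>{0<..t}. \<exists>Dx Dt.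
        ((\<lambda>s. Z_one \<sigma> f m x s) has_real_derivative Dt) (at s within {0<..}) \<and>
        ((\<lambda>y. Z_one \<sigma> f m y s) has_real_derivative Dx) (at x within {0..1}) \<and>
        c * (Dt + \<sigma> * x * (1 - x) * Dx - (m * f / 1) * (Z_one \<sigma> f m (x + 1 * (1 - x)) s - Z_one \<sigma> f m x s)) \<ge> - 0"
  proof (intro ballI)
    fix c x s :: real assume c: "c = 1 \<or> c = -1" and x: "x \<in> {0..1}" and s: "s \<in> {0<..t}"
    then have sp: "s > 0" by simp
    show "\<exists>Dx Dt.
        ((\<lambda>s. Z_one \<sigma> f m x s) has_real_derivative Dt) (at s within {0<..}) \<and>
        ((\<lambda>y. Z_one \<sigma> f m y s) has_real_derivative Dx) (at x within {0..1}) \<and>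
        c * (Dt + \<sigma> * x * (1 - x) * Dx - (m * f / 1) * (Z_one \<sigma> f m (x + 1 * (1 - x)) s - Z_one \<sigma> f m x s)) \<ge> - 0"
    proof -
      obtain Dx Dt where z1: "((\<lambda>s. Z_one \<sigma> f m x s) has_real_derivative Dt) (at s within {0<..})"
        and z2: "((\<lambda>y. Z_one \<sigma> f m y s) has_real_derivative Dx) (at x within {0..1})"
        and z3: "Dt + \<sigma> * x * (1 - x) * Dx - (m * f / 1) * (Z_one \<sigma> f m (x + 1 * (1 - x)) s - Z_one \<sigma> f m x s) = 0"
        using Z_resid[OF sg x sp, of f m] by blast
      have "c * (Dt + \<sigma> * x * (1 - x) * Dx - (m * f / 1) * (Z_one \<sigma> f m (x + 1 * (1 - x)) s - Z_one \<sigma> f m x s)) \<ge> - 0"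
        unfolding z3 by simp
      then show ?thesis using z1 z2 by blast
    qed
  qed
  have Z0: "\<forall>x\<in>{0..1}. Z_one \<sigma> f m x 0 = x" by (simp add: Z_one_def)
  have "1 * (v x t - Z_one \<sigma> f m x t) \<le> 0 * t"
    by (rule sol_vs_W[OF vs _ _ mf Z_cont[OF sg] Z0 WD _ x]) (use t in auto)
  moreover have "-1 * (v x t - Z_one \<sigma> f m x t) \<le> 0 * t"
    by (rule sol_vs_W[OF vs _ _ mf Z_cont[OF sg] Z0 WD _ x]) (use t in auto)
  ultimately show ?thesis by simp
qed

lemma X_bounds:
  fixes v :: "real \<Rightarrow> real \<Rightarrow> real"
  assumes vs: "is_solution \<sigma> f m \<gamma> v" and sm: "\<sigma> > m * f" and sg: "\<sigma> > 0" and mf: "m * f \<ge> 0"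
    and g: "0 < \<gamma>" "\<gamma> \<le> 1" and x: "x \<in> {0..1}" and t: "0 \<le> t" "t \<le> T"
  shows "X_lim \<sigma> f m x t \<le> v x t"
    and "v x t - X_lim \<sigma> f m x t \<le> (m * f * exp ((\<sigma> - m * f) * T) * (\<sigma> / (\<sigma> - m * f) * (exp ((\<sigma> - m * f) * T) - 1))) * \<gamma> * t"
proof -
  define C where "C = m * f * exp ((\<sigma> - m * f) * T) * (\<sigma> / (\<sigma> - m * f) * (exp ((\<sigma> - m * f) * T) - 1))"
  have X0: "\<forall>x\<in>{0..1}. X_lim \<sigma> f m x 0 = x" by (simp add: X_init)
  have WD1: "\<forall>x\<in>{0..1}. \<forall>s\<in>{0<..T}. \<exists>Dx Dt.
        ((\<lambda>s. X_lim \<sigma> f m x s) has_real_derivative Dt) (at s within {0<..}) \<and>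
        ((\<lambda>y. X_lim \<sigma> f m y s) has_real_derivative Dx) (at x within {0..1}) \<and>
        -1 * (Dt + \<sigma> * x * (1 - x) * Dx - (m * f / \<gamma>) * (X_lim \<sigma> f m (x + \<gamma> * (1 - x)) s - X_lim \<sigma> f m x s)) \<ge> - 0"
  proof (intro ballI)
    fix x s :: real assume x: "x \<in> {0..1}" and s: "s \<in> {0<..T}"
    then have sp: "s > 0" by simp
    obtain Dx Dt where z1: "((\<lambda>s. X_lim \<sigma> f m x s) has_real_derivative Dt) (at s within {0<..})"
      and z2: "((\<lambda>y. X_lim \<sigma> f m y s) has_real_derivative Dx) (at x within {0..1})"
      and z3: "Dt + \<sigma> * x * (1 - x) * Dx - (m * f / \<gamma>) * (X_lim \<sigma> f m (x + \<gamma> * (1 - x)) s - X_lim \<sigma> f m x s) \<le> 0"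
      using X_resid[OF sm sg mf g x sp] by blast
    then show "\<exists>Dx Dt.
        ((\<lambda>s. X_lim \<sigma> f m x s) has_real_derivative Dt) (at s within {0<..}) \<and>
        ((\<lambda>y. X_lim \<sigma> f m y s) has_real_derivative Dx) (at x within {0..1}) \<and>
        -1 * (Dt + \<sigma> * x * (1 - x) * Dx - (m * f / \<gamma>) * (X_lim \<sigma> f m (x + \<gamma> * (1 - x)) s - X_lim \<sigma> f m x s)) \<ge> - 0"
      by auto
  qed
  have "-1 * (v x t - X_lim \<sigma> f m x t) \<le> 0 * t"
    by (rule sol_vs_W[OF vs g mf X_cont[OF sm sg] X0 WD1 _ x]) (use t in auto)
  then show "X_lim \<sigma> f m x t \<le> v x t" by simp
  have WD2: "\<forall>x\<in>{0..1}. \<forall>s\<in>{0<..T}. \<exists>Dx Dt.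
        ((\<lambda>s. X_lim \<sigma> f m x s) has_real_derivative Dt) (at s within {0<..}) \<and>
        ((\<lambda>y. X_lim \<sigma> f m y s) has_real_derivative Dx) (at x within {0..1}) \<and>
        1 * (Dt + \<sigma> * x * (1 - x) * Dx - (m * f / \<gamma>) * (X_lim \<sigma> f m (x + \<gamma> * (1 - x)) s - X_lim \<sigma> f m x s)) \<ge> - (C * \<gamma>)"
  proof (intro ballI)
    fix x s :: real assume x: "x \<in> {0..1}" and s: "s \<in> {0<..T}"
    then have sp: "s > 0" by simp
    obtain Dx Dt where z1: "((\<lambda>s. X_lim \<sigma> f m x s) has_real_derivative Dt) (at s within {0<..})"
      and z2: "((\<lambda>y. X_lim \<sigma> f m y s) has_real_derivative Dx) (at x within {0..1})"
      and z3: "Dt + \<sigma> * x * (1 - x) * Dx - (m * f / \<gamma>) * (X_lim \<sigma> f m (x + \<gamma> * (1 - x)) s - X_lim \<sigma> f m x s)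
          \<ge> - (m * f * exp ((\<sigma> - m * f) * s) * (\<sigma> / (\<sigma> - m * f) * (exp ((\<sigma> - m * f) * s) - 1)) * \<gamma>)"
      using X_resid[OF sm sg mf g x sp] by blast
    have cpos: "\<sigma> - m * f > 0" using sm by simp
    have E1: "exp ((\<sigma> - m * f) * s) \<le> exp ((\<sigma> - m * f) * T)"
      using s cpos by (simp add: mult_left_mono)
    have E0: "exp ((\<sigma> - m * f) * s) \<ge> 1" using sp cpos by simp
    have k1: "\<sigma> / (\<sigma> - m * f) * (exp ((\<sigma> - m * f) * s) - 1) \<le> \<sigma> / (\<sigma> - m * f) * (exp ((\<sigma> - m * f) * T) - 1)"
      using E1 sg cpos by (intro mult_left_mono) auto
    have k0: "\<sigma> / (\<sigma> - m * f) * (exp ((\<sigma> - m * f) * s) - 1) \<ge> 0" using E0 sg cpos by simp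
    have EK: "exp ((\<sigma> - m * f) * s) * (\<sigma> / (\<sigma> - m * f) * (exp ((\<sigma> - m * f) * s) - 1))
        \<le> exp ((\<sigma> - m * f) * T) * (\<sigma> / (\<sigma> - m * f) * (exp ((\<sigma> - m * f) * T) - 1))"
      by (rule mult_mono[OF E1 k1 _ k0]) simp
    then have "m * f * exp ((\<sigma> - m * f) * s) * (\<sigma> / (\<sigma> - m * f) * (exp ((\<sigma> - m * f) * s) - 1)) \<le> C"
    proof -
      from mult_left_mono[OF EK mf] show ?thesis unfolding C_def by (simp only: mult.assoc)
    qed
    then have Bd: "m * f * exp ((\<sigma> - m * f) * s) * (\<sigma> / (\<sigma> - m * f) * (exp ((\<sigma> - m * f) * s) - 1)) * \<gamma> \<le> C * \<gamma>"
      using g by (intro mult_right_mono) auto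
    have R0: "(Dt + \<sigma> * x * (1 - x) * Dx - (m * f / \<gamma>) * (X_lim \<sigma> f m (x + \<gamma> * (1 - x)) s - X_lim \<sigma> f m x s)) \<ge> - (C * \<gamma>)"
      using order_trans[OF le_imp_neg_le[OF Bd] z3] .
    have R: "1 * (Dt + \<sigma> * x * (1 - x) * Dx - (m * f / \<gamma>) * (X_lim \<sigma> f m (x + \<gamma> * (1 - x)) s - X_lim \<sigma> f m x s)) \<ge> - (C * \<gamma>)"
      using R0 by simp
    then show "\<exists>Dx Dt.
        ((\<lambda>s. X_lim \<sigma> f m x s) has_real_derivative Dt) (at s within {0<..}) \<and>
        ((\<lambda>y. X_lim \<sigma> f m y s) has_real_derivative Dx) (at x within {0..1}) \<and>
        1 * (Dt + \<sigma> * x * (1 - x) * Dx - (m * f / \<gamma>) * (X_lim \<sigma> f m (x + \<gamma> * (1 - x)) s - X_lim \<sigma> f m x s)) \<ge> - (C * \<gamma>)"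
      using z1 z2 R by blast
  qed
  have "1 * (v x t - X_lim \<sigma> f m x t) \<le> (C * \<gamma>) * t"
    by (rule sol_vs_W[OF vs g mf X_cont[OF sm sg] X0 WD2 _ x]) (use t in auto)
  then show "v x t - X_lim \<sigma> f m x t \<le> (m * f * exp ((\<sigma> - m * f) * T) * (\<sigma> / (\<sigma> - m * f) * (exp ((\<sigma> - m * f) * T) - 1))) * \<gamma> * t"
    by (simp add: C_def)
qed

lemma jump_unif:
  fixes w :: "real \<Rightarrow> real \<Rightarrow> real"
  assumes cw: "continuous_on ({0..1} \<times> {0..T}) (\<lambda>(x, t). w x t)" and g0: "0 < \<gamma>0" "\<gamma>0 \<le> 1"
    and e: "e > 0" and T: "T \<ge> 0"
  shows "\<exists>d>0. \<forall>\<gamma>\<in>{0<..1}. \<bar>\<gamma> - \<gamma>0\<bar> < d \<longrightarrow> (\<forall>x\<in>{0..1}. \<forall>t\<in>{0..T}.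
     \<bar>(w (x + \<gamma>0 * (1 - x)) t - w x t) / \<gamma>0 - (w (x + \<gamma> * (1 - x)) t - w x t) / \<gamma>\<bar> \<le> e)"
proof -
  define K where "K = {0..1::real} \<times> {0..T}"
  define W where "W = (\<lambda>(x, t). w x t)"
  have cK: "compact K" unfolding K_def by (intro compact_Times compact_Icc)
  have K0: "K \<noteq> {}" using T by (auto simp: K_def)
  have cW: "continuous_on K W" using cw by (simp add: K_def W_def)
  have "\<exists>p\<in>K. \<forall>q\<in>K. \<bar>W q\<bar> \<le> \<bar>W p\<bar>"
    by (rule continuous_attains_sup[OF cK K0]) (intro continuous_intros cW)
  then obtain p0 where "p0 \<in> K" and pB: "\<forall>q\<in>K. \<bar>W q\<bar> \<le> \<bar>W p0\<bar>" by blast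
  define B where "B = \<bar>W p0\<bar>"
  have B0: "B \<ge> 0" by (simp add: B_def)
  have wB: "\<And>x t. x \<in> {0..1} \<Longrightarrow> t \<in> {0..T} \<Longrightarrow> \<bar>w x t\<bar> \<le> B"
  proof -
    fix x t :: real assume "x \<in> {0..1}" "t \<in> {0..T}"
    then have "(x, t) \<in> K" by (simp add: K_def)
    from pB[rule_format, OF this] show "\<bar>w x t\<bar> \<le> B" by (simp add: B_def W_def)
  qed
  have uc: "uniformly_continuous_on K W" by (rule compact_uniformly_continuous[OF cW cK])
  have "e * \<gamma>0 / 2 > 0" using e g0 by simp
  then obtain d1 where d1: "d1 > 0" and d1W: "\<forall>p\<in>K. \<forall>p'\<in>K. dist p' p < d1 \<longrightarrow> dist (W p') (W p) < e * \<gamma>0 / 2"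
    using uc unfolding uniformly_continuous_on_def by blast
  define d where "d = min d1 (min (\<gamma>0 / 2) (e * \<gamma>0^2 / (8 * (B + 1))))"
  have dpos: "d > 0" using d1 g0 e B0 by (simp add: d_def)
  show ?thesis
  proof (intro exI[of _ d] conjI dpos ballI impI)
    fix \<gamma> x t :: real assume g: "\<gamma> \<in> {0<..1}" and gd: "\<bar>\<gamma> - \<gamma>0\<bar> < d" and x: "x \<in> {0..1}" and t: "t \<in> {0..T}"
    have gp: "\<gamma> > 0" "\<gamma> \<le> 1" using g by auto
    have p0i: "x + \<gamma>0 * (1 - x) \<in> {0..1}" using phi_in[OF g0 x] .
    have pi: "x + \<gamma> * (1 - x) \<in> {0..1}" using phi_in[OF gp x] .
    define a where "a = w (x + \<gamma>0 * (1 - x)) t - w (x + \<gamma> * (1 - x)) t"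
    define bb where "bb = w (x + \<gamma> * (1 - x)) t - w x t"
    have "\<bar>(\<gamma>0 - \<gamma>) * (1 - x)\<bar> \<le> \<bar>\<gamma> - \<gamma>0\<bar>"
    proof -
      have "\<bar>\<gamma>0 - \<gamma>\<bar> * (1 - x) \<le> \<bar>\<gamma>0 - \<gamma>\<bar> * 1" using x by (intro mult_left_mono) auto
      then show ?thesis using x by (simp add: abs_mult abs_minus_commute)
    qed
    then have "dist (x + \<gamma>0 * (1 - x), t) (x + \<gamma> * (1 - x), t) < d1"
      using gd by (simp add: dist_Pair_Pair dist_real_def d_def algebra_simps)
    then have "dist (W (x + \<gamma>0 * (1 - x), t)) (W (x + \<gamma> * (1 - x), t)) < e * \<gamma>0 / 2"
      using d1W p0i pi t by (auto simp: K_def)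
    then have aa: "\<bar>a\<bar> < e * \<gamma>0 / 2" by (simp add: a_def W_def dist_real_def)
    have bbB: "\<bar>bb\<bar> \<le> 2 * B" using wB[OF pi t] wB[OF x t] unfolding bb_def by linarith
    have eqA: "(w (x + \<gamma>0 * (1 - x)) t - w x t) / \<gamma>0 - (w (x + \<gamma> * (1 - x)) t - w x t) / \<gamma>
        = a / \<gamma>0 + bb * (\<gamma> - \<gamma>0) / (\<gamma>0 * \<gamma>)"
      unfolding a_def bb_def using g0 gp by (simp add: field_simps)
    have t1: "\<bar>a / \<gamma>0\<bar> \<le> e / 2"
    proof -
      have "\<bar>a / \<gamma>0\<bar> = \<bar>a\<bar> / \<gamma>0" using g0 by simp
      also have "\<dots> \<le> (e * \<gamma>0 / 2) / \<gamma>0" using aa g0 by (intro divide_right_mono) auto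
      also have "\<dots> = e / 2" using g0 by simp
      finally show ?thesis .
    qed
    have t2: "\<bar>bb * (\<gamma> - \<gamma>0) / (\<gamma>0 * \<gamma>)\<bar> \<le> e / 2"
    proof -
      have "\<bar>\<gamma> - \<gamma>0\<bar> < \<gamma>0 / 2" using gd by (simp add: d_def)
      then have gg: "\<gamma> \<ge> \<gamma>0 / 2" by linarith
      have g1: "\<bar>\<gamma> - \<gamma>0\<bar> \<le> e * \<gamma>0^2 / (8 * (B + 1))" using gd by (simp add: d_def)
      have num: "\<bar>bb\<bar> * \<bar>\<gamma> - \<gamma>0\<bar> \<le> 2 * B * (e * \<gamma>0^2 / (8 * (B + 1)))"
        using bbB g1 B0 by (intro mult_mono) auto
      have den: "\<gamma>0 * (\<gamma>0 / 2) \<le> \<gamma>0 * \<gamma>" using gg g0 by (intro mult_left_mono) auto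
      have "\<bar>bb * (\<gamma> - \<gamma>0) / (\<gamma>0 * \<gamma>)\<bar> = \<bar>bb\<bar> * \<bar>\<gamma> - \<gamma>0\<bar> / (\<gamma>0 * \<gamma>)"
        using g0 gp by (simp add: abs_mult)
      also have "\<dots> \<le> (2 * B * (e * \<gamma>0^2 / (8 * (B + 1)))) / (\<gamma>0 * (\<gamma>0 / 2))"
        by (rule frac_le) (use num den g0 B0 e in auto)
      also have "\<dots> = e * (B / (2 * (B + 1)))"
      proof -
        have b1: "B + 1 > 0" using B0 by simp
        have "(2 * B * (e * \<gamma>0^2 / (8 * (B + 1)))) / (\<gamma>0 * (\<gamma>0 / 2)) = (4 * B * e * \<gamma>0^2) / (8 * (B + 1) * \<gamma>0^2)"
          using g0 b1 by (simp add: power2_eq_square)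
        also have "\<dots> = (4 * B * e) / (8 * (B + 1))" using g0 by simp
        also have "\<dots> = e * (B / (2 * (B + 1)))" using b1 by (simp add: field_simps)
        finally show ?thesis .
      qed
      also have "\<dots> \<le> e * (1 / 2)"
        using e B0 by (intro mult_left_mono) (auto simp: field_simps)
      finally show ?thesis by simp
    qed
    show "\<bar>(w (x + \<gamma>0 * (1 - x)) t - w x t) / \<gamma>0 - (w (x + \<gamma> * (1 - x)) t - w x t) / \<gamma>\<bar> \<le> e"
    proof -
      have "\<bar>a / \<gamma>0 + bb * (\<gamma> - \<gamma>0) / (\<gamma>0 * \<gamma>)\<bar> \<le> \<bar>a / \<gamma>0\<bar> + \<bar>bb * (\<gamma> - \<gamma>0) / (\<gamma>0 * \<gamma>)\<bar>"
        by (rule abs_triangle_ineq)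
      also have "\<dots> \<le> e / 2 + e / 2" by (rule add_mono[OF t1 t2])
      finally show ?thesis unfolding eqA by simp
    qed
  qed
qed

lemma cont_gamma:
  fixes u :: "real \<Rightarrow> real \<Rightarrow> real \<Rightarrow> real"
  assumes sol: "\<forall>\<gamma>\<in>{0<..1}. is_solution \<sigma> f m \<gamma> (u \<gamma>)" and g0: "0 < \<gamma>0" "\<gamma>0 \<le> 1"
    and mf: "m * f \<ge> 0" and T: "T \<ge> 0" and e: "e > 0"
  shows "\<exists>d>0. \<forall>\<gamma>\<in>{0<..1}. \<bar>\<gamma> - \<gamma>0\<bar> < d \<longrightarrow> (\<forall>x\<in>{0..1}. \<forall>t\<in>{0..T}. \<bar>u \<gamma> x t - u \<gamma>0 x t\<bar> \<le> e)"
proof -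
  have s0: "is_solution \<sigma> f m \<gamma>0 (u \<gamma>0)" using sol g0 by simp
  define e' where "e' = e / (m * f * T + 1)"
  have mfT: "m * f * T \<ge> 0" using mf T by simp
  have e'p: "e' > 0" using e mfT by (simp add: e'_def)
  obtain d where dp: "d > 0" and dJ: "\<forall>\<gamma>\<in>{0<..1}. \<bar>\<gamma> - \<gamma>0\<bar> < d \<longrightarrow> (\<forall>x\<in>{0..1}. \<forall>t\<in>{0..T}.
     \<bar>(u \<gamma>0 (x + \<gamma>0 * (1 - x)) t - u \<gamma>0 x t) / \<gamma>0 - (u \<gamma>0 (x + \<gamma> * (1 - x)) t - u \<gamma>0 x t) / \<gamma>\<bar> \<le> e')"
    using jump_unif[OF sol_cont[OF s0] g0 e'p T] by blast
  have fin: "m * f * e' * T \<le> e"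
  proof -
    have "m * f * e' * T = e * (m * f * T / (m * f * T + 1))" using mfT by (simp add: e'_def field_simps)
    also have "\<dots> \<le> e * 1" using e mfT by (intro mult_left_mono) auto
    finally show ?thesis by simp
  qed
  show ?thesis
  proof (intro exI[of _ d] conjI dp ballI impI)
    fix \<gamma> x t :: real assume g: "\<gamma> \<in> {0<..1}" and gd: "\<bar>\<gamma> - \<gamma>0\<bar> < d" and x: "x \<in> {0..1}" and t: "t \<in> {0..T}"
    have sg: "is_solution \<sigma> f m \<gamma> (u \<gamma>)" using sol g by simp
    have gp: "0 < \<gamma>" "\<gamma> \<le> 1" using g by auto
    have WD: "\<And>c. c = 1 \<or> c = -1 \<Longrightarrow> \<forall>x\<in>{0..1}. \<forall>s\<in>{0<..T}. \<exists>Dx Dt.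
        ((\<lambda>s. u \<gamma>0 x s) has_real_derivative Dt) (at s within {0<..}) \<and>
        ((\<lambda>y. u \<gamma>0 y s) has_real_derivative Dx) (at x within {0..1}) \<and>
        c * (Dt + \<sigma> * x * (1 - x) * Dx - (m * f / \<gamma>) * (u \<gamma>0 (x + \<gamma> * (1 - x)) s - u \<gamma>0 x s)) \<ge> - (m * f * e')"
    proof (intro ballI)
      fix c x s :: real assume c: "c = 1 \<or> c = -1" and x: "x \<in> {0..1}" and s: "s \<in> {0<..T}"
      then have sp: "s > 0" by simp
      obtain Dx Dt where a1: "((\<lambda>s. u \<gamma>0 x s) has_real_derivative Dt) (at s within {0<..})"
        and a2: "((\<lambda>y. u \<gamma>0 y s) has_real_derivative Dx) (at x within {0..1})"
        and a3: "Dt + \<sigma> * x * (1 - x) * Dx = (m * f / \<gamma>0) * (u \<gamma>0 (x + \<gamma>0 * (1 - x)) s - u \<gamma>0 x s)"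
        using sol_partials[OF s0 x sp] by blast
      have sT: "s \<in> {0..T}" using s by simp
      have J: "\<bar>(u \<gamma>0 (x + \<gamma>0 * (1 - x)) s - u \<gamma>0 x s) / \<gamma>0 - (u \<gamma>0 (x + \<gamma> * (1 - x)) s - u \<gamma>0 x s) / \<gamma>\<bar> \<le> e'"
        using dJ g gd x sT by blast
      define R where "R = Dt + \<sigma> * x * (1 - x) * Dx - (m * f / \<gamma>) * (u \<gamma>0 (x + \<gamma> * (1 - x)) s - u \<gamma>0 x s)"
      have "R = m * f * ((u \<gamma>0 (x + \<gamma>0 * (1 - x)) s - u \<gamma>0 x s) / \<gamma>0 - (u \<gamma>0 (x + \<gamma> * (1 - x)) s - u \<gamma>0 x s) / \<gamma>)"
        unfolding R_def a3 using gp g0 by (simp add: field_simps)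
      then have "\<bar>R\<bar> = m * f * \<bar>(u \<gamma>0 (x + \<gamma>0 * (1 - x)) s - u \<gamma>0 x s) / \<gamma>0 - (u \<gamma>0 (x + \<gamma> * (1 - x)) s - u \<gamma>0 x s) / \<gamma>\<bar>"
        by (simp only: abs_mult[of "m * f"] abs_of_nonneg[OF mf])
      also have "\<dots> \<le> m * f * e'" using J mf by (rule mult_left_mono)
      finally have "\<bar>R\<bar> \<le> m * f * e'" .
      then have "c * R \<ge> - (m * f * e')" using c by auto
      then show "\<exists>Dx Dt.
        ((\<lambda>s. u \<gamma>0 x s) has_real_derivative Dt) (at s within {0<..}) \<and>
        ((\<lambda>y. u \<gamma>0 y s) has_real_derivative Dx) (at x within {0..1}) \<and>
        c * (Dt + \<sigma> * x * (1 - x) * Dx - (m * f / \<gamma>) * (u \<gamma>0 (x + \<gamma> * (1 - x)) s - u \<gamma>0 x s)) \<ge> - (m * f * e')"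
        using a1 a2 unfolding R_def by blast
    qed
    have i0: "\<forall>x\<in>{0..1}. u \<gamma>0 x 0 = x" using sol_init[OF s0] by blast
    have up: "1 * (u \<gamma> x t - u \<gamma>0 x t) \<le> (m * f * e') * t"
      by (rule sol_vs_W[OF sg gp mf sol_cont[OF s0] i0 WD _ x t]) simp_all
    have lo: "-1 * (u \<gamma> x t - u \<gamma>0 x t) \<le> (m * f * e') * t"
      by (rule sol_vs_W[OF sg gp mf sol_cont[OF s0] i0 WD _ x t]) simp_all
    have "(m * f * e') * t \<le> m * f * e' * T" using t mf e'p by (intro mult_left_mono) auto
    then show "\<bar>u \<gamma> x t - u \<gamma>0 x t\<bar> \<le> e" using up lo fin by simp
  qed
qed

lemma unif_cont:
  fixes u :: "real \<Rightarrow> real \<Rightarrow> real \<Rightarrow> real"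
  assumes sol: "\<forall>\<gamma>\<in>{0<..1}. is_solution \<sigma> f m \<gamma> (u \<gamma>)" and g0: "\<gamma>0 \<in> {0<..1}"
    and mf: "m * f \<ge> 0" and T: "T \<ge> 0"
  shows "uniform_limit ({0..1} \<times> {0..T}) (\<lambda>\<gamma> (x, t). u \<gamma> x t) (\<lambda>(x, t). u \<gamma>0 x t) (at \<gamma>0 within {0<..1})"
  unfolding uniform_limit_iff
proof (intro allI impI)
  fix e :: real assume e: "e > 0"
  then have e2: "e / 2 > 0" by simp
  have g0': "0 < \<gamma>0" "\<gamma>0 \<le> 1" using g0 by auto
  obtain d where dp: "d > 0" and dd: "\<forall>\<gamma>\<in>{0<..1}. \<bar>\<gamma> - \<gamma>0\<bar> < d \<longrightarrow> (\<forall>x\<in>{0..1}. \<forall>t\<in>{0..T}. \<bar>u \<gamma> x t - u \<gamma>0 x t\<bar> \<le> e / 2)"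
    using cont_gamma[OF sol g0' mf T e2] by blast
  show "\<forall>\<^sub>F \<gamma> in at \<gamma>0 within {0<..1}. \<forall>p\<in>{0..1} \<times> {0..T}. dist ((\<lambda>(x, t). u \<gamma> x t) p) ((\<lambda>(x, t). u \<gamma>0 x t) p) < e"
    unfolding eventually_at
  proof (intro exI[of _ d] conjI dp ballI impI)
    fix \<gamma> :: real and p :: "real \<times> real" assume g: "\<gamma> \<in> {0<..1}" and gd: "\<gamma> \<noteq> \<gamma>0 \<and> dist \<gamma> \<gamma>0 < d" and p: "p \<in> {0..1} \<times> {0..T}"
    obtain x t where pe: "p = (x, t)" by force
    have "\<bar>u \<gamma> x t - u \<gamma>0 x t\<bar> \<le> e / 2" using dd g gd p pe by (auto simp: dist_real_def)
    then show "dist ((\<lambda>(x, t). u \<gamma> x t) p) ((\<lambda>(x, t). u \<gamma>0 x t) p) < e"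
      using e by (simp add: pe dist_real_def)
  qed
qed

lemma unif_X:
  fixes u :: "real \<Rightarrow> real \<Rightarrow> real \<Rightarrow> real"
  assumes sol: "\<forall>\<gamma>\<in>{0<..1}. is_solution \<sigma> f m \<gamma> (u \<gamma>)"
    and sm: "\<sigma> > m * f" and sg: "\<sigma> > 0" and mf: "m * f \<ge> 0" and T: "T \<ge> 0"
  shows "uniform_limit ({0..1} \<times> {0..T}) (\<lambda>\<gamma> (x, t). u \<gamma> x t) (\<lambda>(x, t). X_lim \<sigma> f m x t) (at_right 0)"
  unfolding uniform_limit_iff
proof (intro allI impI)
  fix e :: real assume e: "e > 0"
  define C where "C = m * f * exp ((\<sigma> - m * f) * T) * (\<sigma> / (\<sigma> - m * f) * (exp ((\<sigma> - m * f) * T) - 1))"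
  have cpos: "\<sigma> - m * f > 0" using sm by simp
  have "exp ((\<sigma> - m * f) * T) * (\<sigma> / (\<sigma> - m * f) * (exp ((\<sigma> - m * f) * T) - 1)) \<ge> 0"
    using cpos sg T by (intro mult_nonneg_nonneg) auto
  from mult_nonneg_nonneg[OF mf this] have C0: "C \<ge> 0" unfolding C_def by (simp only: mult.assoc)
  have CT: "C * T \<ge> 0" using C0 T by simp
  define b where "b = min 1 (e / (C * T + 1))"
  have bp: "b > 0" using e CT by (simp add: b_def)
  show "\<forall>\<^sub>F \<gamma> in at_right 0. \<forall>p\<in>{0..1} \<times> {0..T}. dist ((\<lambda>(x, t). u \<gamma> x t) p) ((\<lambda>(x, t). X_lim \<sigma> f m x t) p) < e"
    unfolding eventually_at_right[of 0 1, OF zero_less_one]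
  proof (intro exI[of _ b] conjI bp allI impI ballI)
    fix \<gamma> :: real and p :: "real \<times> real" assume g: "0 < \<gamma>" and gb: "\<gamma> < b" and p: "p \<in> {0..1} \<times> {0..T}"
    obtain x t where pe: "p = (x, t)" by force
    have x: "x \<in> {0..1}" and t: "0 \<le> t" "t \<le> T" using p pe by auto
    have g1: "\<gamma> \<le> 1" using gb by (simp add: b_def)
    have vs: "is_solution \<sigma> f m \<gamma> (u \<gamma>)" using sol g g1 by simp
    have lo: "X_lim \<sigma> f m x t \<le> u \<gamma> x t" using X_bounds(1)[OF vs sm sg mf g g1 x t] .
    have up: "u \<gamma> x t - X_lim \<sigma> f m x t \<le> C * \<gamma> * t" using X_bounds(2)[OF vs sm sg mf g g1 x t] by (simp add: C_def)
    have "C * \<gamma> * t \<le> C * \<gamma> * T" using C0 g t by (intro mult_left_mono) auto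
    also have "\<dots> = (C * T) * \<gamma>" by simp
    also have "\<dots> \<le> (C * T) * (e / (C * T + 1))"
      using CT gb by (intro mult_left_mono) (auto simp: b_def)
    also have "\<dots> < e"
    proof -
      have "(C * T) * (e / (C * T + 1)) = e * ((C * T) / (C * T + 1))" by simp
      also have "\<dots> < e * 1" using e CT by (intro mult_strict_left_mono) auto
      finally show ?thesis by simp
    qed
    finally show "dist ((\<lambda>(x, t). u \<gamma> x t) p) ((\<lambda>(x, t). X_lim \<sigma> f m x t) p) < e"
      using lo up by (simp add: pe dist_real_def)
  qed
qed

theorem proposition4p10:
  fixes \<sigma> f m :: real and u :: "real \<Rightarrow> real \<Rightarrow> real \<Rightarrow> real"
  assumes "\<sigma> > 0" "f > 0" "m > 0" "\<sigma> > m * f"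
    and sol: "\<forall>\<gamma>\<in>{0<..1}. is_solution \<sigma> f m \<gamma> (u \<gamma>)"
  shows "(\<forall>x\<in>{0..1}. \<forall>t\<ge>0.
            mono_on {0<..1} (\<lambda>\<gamma>. u \<gamma> x t) \<and>
            continuous_on {0<..1} (\<lambda>\<gamma>. u \<gamma> x t) \<and>
            u 1 x t = Z_one \<sigma> f m x t \<and>
            ((\<lambda>\<gamma>. u \<gamma> x t) \<longlongrightarrow> X_lim \<sigma> f m x t) (at_right 0))
       \<and> (\<forall>T>0.
            (\<forall>\<gamma>0\<in>{0<..1}. uniform_limit ({0..1} \<times> {0..T}) (\<lambda>\<gamma> (x, t). u \<gamma> x t)
                 (\<lambda>(x, t). u \<gamma>0 x t) (at \<gamma>0 within {0<..1})) \<and>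
            uniform_limit ({0..1} \<times> {0..T}) (\<lambda>\<gamma> (x, t). u \<gamma> x t)
                 (\<lambda>(x, t). X_lim \<sigma> f m x t) (at_right 0))"
proof -
  have sg: "\<sigma> > 0" and sm: "\<sigma> > m * f" using assms by auto
  have mf: "m * f \<ge> 0" using assms by simp
  have P2: "\<forall>T>0.
            (\<forall>\<gamma>0\<in>{0<..1}. uniform_limit ({0..1} \<times> {0..T}) (\<lambda>\<gamma> (x, t). u \<gamma> x t)
                 (\<lambda>(x, t). u \<gamma>0 x t) (at \<gamma>0 within {0<..1})) \<and>
            uniform_limit ({0..1} \<times> {0..T}) (\<lambda>\<gamma> (x, t). u \<gamma> x t)
                 (\<lambda>(x, t). X_lim \<sigma> f m x t) (at_right 0)"
  proof (intro allI impI conjI ballI)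
    fix T \<gamma>0 :: real assume T: "T > 0" and g0: "\<gamma>0 \<in> {0<..1}"
    show "uniform_limit ({0..1} \<times> {0..T}) (\<lambda>\<gamma> (x, t). u \<gamma> x t) (\<lambda>(x, t). u \<gamma>0 x t) (at \<gamma>0 within {0<..1})"
      using unif_cont[OF sol g0 mf] T by simp
  next
    fix T :: real assume T: "T > 0"
    show "uniform_limit ({0..1} \<times> {0..T}) (\<lambda>\<gamma> (x, t). u \<gamma> x t) (\<lambda>(x, t). X_lim \<sigma> f m x t) (at_right 0)"
      using unif_X[OF sol sm sg mf] T by simp
  qed
  have P1: "\<forall>x\<in>{0..1}. \<forall>t\<ge>0.
            mono_on {0<..1} (\<lambda>\<gamma>. u \<gamma> x t) \<and>
            continuous_on {0<..1} (\<lambda>\<gamma>. u \<gamma> x t) \<and>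
            u 1 x t = Z_one \<sigma> f m x t \<and>
            ((\<lambda>\<gamma>. u \<gamma> x t) \<longlongrightarrow> X_lim \<sigma> f m x t) (at_right 0)"
  proof (intro ballI allI impI conjI)
    fix x t :: real assume x: "x \<in> {0..1}" and t: "t \<ge> 0"
    show "mono_on {0<..1} (\<lambda>\<gamma>. u \<gamma> x t)"
    proof (rule mono_onI)
      fix r s :: real assume r: "r \<in> {0<..1}" and s: "s \<in> {0<..1}" and rs: "r \<le> s"
      show "u r x t \<le> u s x t"
        using gamma_mono[of \<sigma> f m r "u r" s "u s"] sol r s rs mf sg x t by auto
    qed
    show "continuous_on {0<..1} (\<lambda>\<gamma>. u \<gamma> x t)"
      unfolding continuous_on_iff
    proof (intro ballI allI impI)
      fix \<gamma>0 e :: real assume g0: "\<gamma>0 \<in> {0<..1}" and e: "e > 0"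
      have g0': "0 < \<gamma>0" "\<gamma>0 \<le> 1" using g0 by auto
      have e2: "e / 2 > 0" using e by simp
      obtain d where dp: "d > 0" and dd: "\<forall>\<gamma>\<in>{0<..1}. \<bar>\<gamma> - \<gamma>0\<bar> < d \<longrightarrow> (\<forall>x\<in>{0..1}. \<forall>s\<in>{0..t}. \<bar>u \<gamma> x s - u \<gamma>0 x s\<bar> \<le> e / 2)"
        using cont_gamma[OF sol g0' mf t e2] by blast
      show "\<exists>d>0. \<forall>\<gamma>\<in>{0<..1}. dist \<gamma> \<gamma>0 < d \<longrightarrow> dist (u \<gamma> x t) (u \<gamma>0 x t) < e"
      proof (intro exI[of _ d] conjI dp ballI impI)
        fix \<gamma> :: real assume g: "\<gamma> \<in> {0<..1}" and gd: "dist \<gamma> \<gamma>0 < d"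
        have "\<bar>u \<gamma> x t - u \<gamma>0 x t\<bar> \<le> e / 2" using dd g gd x t by (auto simp: dist_real_def)
        then show "dist (u \<gamma> x t) (u \<gamma>0 x t) < e" using e by (simp add: dist_real_def)
      qed
    qed
    show "u 1 x t = Z_one \<sigma> f m x t"
      using u1_Z[OF _ sg mf x t] sol by simp
    have "uniform_limit ({0..1} \<times> {0..t+1}) (\<lambda>\<gamma> (x, t). u \<gamma> x t) (\<lambda>(x, t). X_lim \<sigma> f m x t) (at_right 0)"
      using P2 t by simp
    from tendsto_uniform_limitI[OF this, of "(x, t)"]
    show "((\<lambda>\<gamma>. u \<gamma> x t) \<longlongrightarrow> X_lim \<sigma> f m x t) (at_right 0)" using x t by simp
  qed
  show ?thesis using P1 P2 by blast
qed

end
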